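(* Let $\mathcal{D}$ be a distribution over probability distributions on $\mathbb{R}$ such that, with probability $1$, the distribution $X\sim\mathcal{D}$ has no atoms. Let $q\in[0,1]$, $\epsilon>0$. The three-phase quantile estimator (described in the context) uses in expectation $O(1/\epsilon+\sigma_q^2/\epsilon^2)$ samples from $\mathcal{D}$, and with probability at least an absolute positive constant it outputs $\hat N$ satisfying $|\Pr_{Y\sim M(\mathcal{D})}(Y\le\hat N)-q|\le\epsilon$.
   Context: $M(\mathcal{D})$ is the mixture distribution: $\Pr_{M(\mathcal{D})}[A]=\mathbb{E}_{X\sim\mathcal{D}}[\Pr_X[A]]$ (atomless under the hypothesis). For an atomless distribution $X$ on $\mathbb{R}$, $q_X(x)=\Pr_{Y\sim X}(Y\le x)$. Let $N$ be the $q$-th quantile of $M(\mathcal{D})$, i.e. $N=\inf\{x: \Pr_{M(\mathcal{D})}(Y\le x)\ge q\}$, and $\sigma_q^2=\mathrm{Var}_{X\sim\mathcal{D}}[q_X(N)]$. Three-phase estimator (with sufficiently large absolute constants in the $O(\cdot)$): set $T_1=O(1/\epsilon)$; draw $X_1,\dots,X_{T_1}\sim\mathcal{D}$ and let $\tilde N$ be the $q$-th quantile of the mixture $M(X_1,\dots,X_{T_1})$ (uniform mixture of the sampled distributions); draw $X_{T_1+1},\dots,X_{2T_1}$ and set $\tilde\sigma^2=\frac1{T_1}\sum_{i=T_1+1}^{2T_1}(q_{X_i}(\tilde N)-q)^2$; set $T_2=O(1/\epsilon+\tilde\sigma^2/\epsilon^2)$; draw $X_{2T_1+1},\dots,X_{2T_1+T_2}$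 and return $\hat N$, the $q$-th quantile of the uniform mixture of these $T_2$ distributions. *)

theory Defs
  imports "HOL-Probability.Probability"
begin

text \<open>CDF of a distribution on the reals, evaluated at an extended real
  (so that quantiles equal to minus/plus infinity, needed for q = 0 or 1, are handled):
  q_X(t) = Pr_{Y ~ X}(Y <= t).\<close>
definition cdf_at :: "real measure \<Rightarrow> ereal \<Rightarrow> real" where
  "cdf_at X t = measure X {y::real. ereal y \<le> t}"

definition mixture_cdf :: "real measure measure \<Rightarrow> ereal \<Rightarrow> real" where
  "mixture_cdf D t = (\<integral>X. cdf_at X t \<partial>D)"

definition unif_mixture_cdf :: "(nat \<Rightarrow> real measure) \<Rightarrow> nat set \<Rightarrow> ereal \<Rightarrow> real" where
  "unif_mixture_cdf Xs I t = (\<Sum>i\<in>I. cdf_at (Xs i) t) / real (card I)"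

definition quantile :: "(ereal \<Rightarrow> real) \<Rightarrow> real \<Rightarrow> ereal" where
  "quantile F q = Inf {t::ereal. F t \<ge> q}"

definition sigma_sq :: "real measure measure \<Rightarrow> real \<Rightarrow> real" where
  "sigma_sq D q = prob_space.variance D (\<lambda>X. cdf_at X (quantile (mixture_cdf D) q))"

text \<open>The three-phase estimator, run on an i.i.d. sequence \<omega> 0, \<omega> 1, ... of
  draws from D, with constants a1 (phase 1/2 length T1 = ceil(a1/eps)) and a2
  (phase 3 length T2 = ceil(a2 (1/eps + sigma~^2/eps^2))).\<close>
definition est_T1 :: "real \<Rightarrow> real \<Rightarrow> nat" where
  "est_T1 a1 \<epsilon> = nat \<lceil>a1 / \<epsilon>\<rceil>"

definition est_Ntilde :: "real \<Rightarrow> real \<Rightarrow> real \<Rightarrow> (nat \<Rightarrow> real measure) \<Rightarrow> ereal" where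
  "est_Ntilde a1 q \<epsilon> \<omega> = quantile (unif_mixture_cdf \<omega> {0..<est_T1 a1 \<epsilon>}) q"

definition est_sigma_sq :: "real \<Rightarrow> real \<Rightarrow> real \<Rightarrow> (nat \<Rightarrow> real measure) \<Rightarrow> real" where
  "est_sigma_sq a1 q \<epsilon> \<omega> =
     (\<Sum>i\<in>{est_T1 a1 \<epsilon>..<2 * est_T1 a1 \<epsilon>}. (cdf_at (\<omega> i) (est_Ntilde a1 q \<epsilon> \<omega>) - q)\<^sup>2)
       / real (est_T1 a1 \<epsilon>)"

definition est_T2 :: "real \<Rightarrow> real \<Rightarrow> real \<Rightarrow> real \<Rightarrow> (nat \<Rightarrow> real measure) \<Rightarrow> nat" where
  "est_T2 a1 a2 q \<epsilon> \<omega> = nat \<lceil>a2 * (1 / \<epsilon> + est_sigma_sq a1 q \<epsilon> \<omega> / \<epsilon>\<^sup>2)\<rceil>"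

definition est_samples :: "real \<Rightarrow> real \<Rightarrow> real \<Rightarrow> real \<Rightarrow> (nat \<Rightarrow> real measure) \<Rightarrow> nat" where
  "est_samples a1 a2 q \<epsilon> \<omega> = 2 * est_T1 a1 \<epsilon> + est_T2 a1 a2 q \<epsilon> \<omega>"

definition est_output :: "real \<Rightarrow> real \<Rightarrow> real \<Rightarrow> real \<Rightarrow> (nat \<Rightarrow> real measure) \<Rightarrow> ereal" where
  "est_output a1 a2 q \<epsilon> \<omega> =
     quantile (unif_mixture_cdf \<omega>
       {2 * est_T1 a1 \<epsilon>..<2 * est_T1 a1 \<epsilon> + est_T2 a1 a2 q \<epsilon> \<omega>}) q"

end

theory Submission
  imports Defs
begin

definition dn :: "ereal \<Rightarrow> nat \<Rightarrow> ereal" where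
  "dn t n = (case t of ereal r \<Rightarrow> ereal (r + 1 / Suc n) | PInfty \<Rightarrow> PInfty | MInfty \<Rightarrow> ereal (- real n))"

definition un :: "ereal \<Rightarrow> nat \<Rightarrow> ereal" where
  "un t n = (case t of ereal r \<Rightarrow> ereal (r - 1 / Suc n) | PInfty \<Rightarrow> ereal (real n) | MInfty \<Rightarrow> MInfty)"

lemma dn_gt: "t \<noteq> \<infinity> \<Longrightarrow> t < dn t n"
  by (cases t) (auto simp: dn_def)

lemma dn_dec: "t \<noteq> \<infinity> \<Longrightarrow> m \<le> n \<Longrightarrow> dn t n \<le> dn t m"
  by (cases t) (auto simp: dn_def frac_le)

lemma un_lt: "t \<noteq> -\<infinity> \<Longrightarrow> un t n < t"
  by (cases t) (auto simp: un_def)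

lemma un_inc: "m \<le> n \<Longrightarrow> un t m \<le> un t n"
  by (cases t) (auto simp: un_def frac_le)

lemma dn_Inter: "t \<noteq> \<infinity> \<Longrightarrow> (\<Inter>n. {y::real. ereal y \<le> dn t n}) = {y. ereal y \<le> t}"
proof (cases t)
  case (real r)
  have "y \<le> r" if "\<forall>n. y \<le> r + 1 / Suc n" for y
  proof (rule ccontr)
    assume "\<not> y \<le> r"
    then obtain n where "inverse (Suc n) < y - r"
      using reals_Archimedean[of "y - r"] by auto
    then have "1 / Suc n < y - r" by (simp add: inverse_eq_divide)
    with that show False by (smt (verit))
  qed
  moreover have "y \<le> r + 1 / Suc n" if "y \<le> r" for y n
    using that by (smt (verit) divide_nonneg_nonneg of_nat_0_le_iff)
  ultimately show ?thesis using real by (auto simp: dn_def)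
next
  case MInf
  have False if "\<forall>n. y \<le> - real n" for y::real
    using that reals_Archimedean2[of "-y"] by (smt (verit))
  then show ?thesis using MInf by (auto simp: dn_def)
qed simp

lemma un_Union: "t \<noteq> -\<infinity> \<Longrightarrow> (\<Union>n. {y::real. ereal y \<le> un t n}) = {y. ereal y < t}"
proof (cases t)
  case (real r)
  have "\<exists>n. y \<le> r - 1 / Suc n" if "y < r" for y
  proof -
    obtain n where "inverse (Suc n) < r - y"
      using reals_Archimedean[of "r - y"] \<open>y < r\<close> by auto
    then have "1 / Suc n < r - y" by (simp add: inverse_eq_divide)
    then show ?thesis by (intro exI[of _ n]) (smt (verit))
  qed
  moreover have "y < r" if "y \<le> r - 1 / Suc n" for y n
    using that by (smt (verit) divide_pos_pos of_nat_0_less_iff zero_less_Suc)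
  ultimately show ?thesis using real by (auto simp: un_def)
next
  case PInf
  have "\<exists>n. y \<le> real n" for y::real
    using real_arch_simple by blast
  then show ?thesis using PInf by (auto simp: un_def)
qed simp

lemma cdf_set_borel[measurable]: "{y::real. ereal y \<le> t} \<in> sets borel"
  by measurable

lemma cdf_set_borel'[measurable]: "{y::real. ereal y < t} \<in> sets borel"
  by measurable

locale rdist =
  fixes X :: "real measure"
  assumes X_prob: "prob_space X" and X_sets: "sets X = sets borel"
begin

interpretation prob_space X by (rule X_prob)

lemma space_X[simp]: "space X = UNIV"
  using sets_eq_imp_space_eq[OF X_sets] by simp

lemma sets_X_cdf[simp]: "{y::real. ereal y \<le> t} \<in> sets X"
  using X_sets by simp

lemma sets_X_cdf'[simp]: "{y::real. ereal y < t} \<in> sets X"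
  using X_sets by simp

lemma cdf_nonneg: "0 \<le> cdf_at X t"
  by (simp add: cdf_at_def)

lemma cdf_le1: "cdf_at X t \<le> 1"
  by (simp add: cdf_at_def)

lemma cdf_mono: "s \<le> t \<Longrightarrow> cdf_at X s \<le> cdf_at X t"
  unfolding cdf_at_def by (intro finite_measure_mono) auto

lemma cdf_top: "cdf_at X \<infinity> = 1"
  using prob_space by (simp add: cdf_at_def)

lemma cdf_bot: "cdf_at X (-\<infinity>) = 0"
  by (simp add: cdf_at_def)

lemma cdf_right: "t \<noteq> \<infinity> \<Longrightarrow> (\<lambda>n. cdf_at X (dn t n)) \<longlonglongrightarrow> cdf_at X t"
  unfolding cdf_at_def
  apply (subst dn_Inter[symmetric], assumption)
  apply (rule finite_Lim_measure_decseq)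
   apply auto[1]
  apply (auto simp: decseq_def intro: order.trans dn_dec)
  done

lemma lcdf: "t \<noteq> -\<infinity> \<Longrightarrow> (\<lambda>n. cdf_at X (un t n)) \<longlonglongrightarrow> measure X {y. ereal y < t}"
  unfolding cdf_at_def
  apply (subst un_Union[symmetric], assumption)
  apply (rule finite_Lim_measure_incseq)
   apply auto[1]
  apply (auto simp: incseq_def intro: order.trans un_inc)
  done

lemma lcdf_eq: assumes "\<forall>x. measure X {x} = 0" shows "measure X {y. ereal y < t} = cdf_at X t"
proof (cases t)
  case (real r)
  have "{y. ereal y \<le> t} = {y. ereal y < t} \<union> {r}" using real by auto
  then have "cdf_at X t = measure X {y. ereal y < t} + measure X {r}"
    unfolding cdf_at_def by (subst finite_measure_Union[symmetric]) (auto simp: real X_sets)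
  then show ?thesis using assms by simp
qed (auto simp: cdf_at_def)

lemma cdf_left: assumes "\<forall>x. measure X {x} = 0" "t \<noteq> -\<infinity>"
  shows "(\<lambda>n. cdf_at X (un t n)) \<longlonglongrightarrow> cdf_at X t"
  using lcdf[OF assms(2)] lcdf_eq[OF assms(1)] by simp

end


lemma quantile_le_iff:
  fixes F :: "ereal \<Rightarrow> real"
  assumes mono: "mono F" and rc: "\<And>t. t \<noteq> \<infinity> \<Longrightarrow> (\<lambda>n. F (dn t n)) \<longlonglongrightarrow> F t"
    and top: "q \<le> F \<infinity>"
  shows "q \<le> F (quantile F q)" and "quantile F q \<le> t \<longleftrightarrow> q \<le> F t"
proof -
  let ?S = "{t. q \<le> F t}"
  let ?Q = "quantile F q"
  have QI: "?Q = Inf ?S" by (simp add: quantile_def)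
  show A: "q \<le> F ?Q"
  proof (cases "?Q = \<infinity>")
    case True then show ?thesis using top by simp
  next
    case False
    show ?thesis
    proof (rule ccontr)
      assume "\<not> q \<le> F ?Q"
      then have "F ?Q < q" by simp
      from order_tendstoD(2)[OF rc[OF False] this]
      obtain n where n: "F (dn ?Q n) < q" by (auto simp: eventually_sequentially)
      have "Inf ?S < dn ?Q n" using dn_gt[OF False] QI by simp
      then obtain s where s: "s \<in> ?S" "s < dn ?Q n" by (auto simp: Inf_less_iff)
      then have "F s \<le> F (dn ?Q n)" using mono by (auto simp: mono_def)
      with s n show False by simp
    qed
  qed
  show "?Q \<le> t \<longleftrightarrow> q \<le> F t"
  proof
    assume "?Q \<le> t" then show "q \<le> F t" using A mono by (meson mono_def order_trans)
  next
    assume "q \<le> F t" then show "?Q \<le> t" unfolding QI by (auto intro: Inf_lower)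
  qed
qed

lemma quantile_exact:
  fixes G :: "ereal \<Rightarrow> real"
  assumes mono: "mono G" and rc: "\<And>t. t \<noteq> \<infinity> \<Longrightarrow> (\<lambda>n. G (dn t n)) \<longlonglongrightarrow> G t"
    and lc: "\<And>t. t \<noteq> -\<infinity> \<Longrightarrow> (\<lambda>n. G (un t n)) \<longlonglongrightarrow> G t"
    and bot: "G (-\<infinity>) = 0" and top: "G \<infinity> = 1" and c: "0 \<le> c" "c \<le> 1"
  shows "G (quantile G c) = c"
proof -
  let ?Q = "quantile G c"
  have ge: "c \<le> G ?Q" using quantile_le_iff(1)[OF mono rc] top c by auto
  have le: "G ?Q \<le> c"
  proof (cases "?Q = -\<infinity>")
    case True then show ?thesis using bot c by simp
  next
    case False
    have "G (un ?Q n) < c" for n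
    proof (rule ccontr)
      assume "\<not> G (un ?Q n) < c"
      then have "?Q \<le> un ?Q n" using quantile_le_iff(2)[OF mono rc] top c by auto
      with un_lt[OF False, of n] show False by simp
    qed
    then show ?thesis
      by (intro LIMSEQ_le_const2[OF lc[OF False]]) (auto intro: less_imp_le)
  qed
  from ge le show ?thesis by simp
qed

lemma mono_ereal_borel:
  fixes G :: "ereal \<Rightarrow> real"
  assumes mono: "mono G"
  shows "G \<in> borel_measurable borel"
proof (rule borel_measurableI_le)
  fix c
  define S where "S = {x. G x \<le> c}"
  have down: "x \<in> S" if "y \<in> S" "x \<le> y" for x y
    using that mono unfolding S_def mono_def by (smt (verit) mem_Collect_eq)
  have "S \<in> sets borel"
  proof (cases "Sup S \<in> S")
    case True
    have "S = {..Sup S}"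
    proof (intro equalityI subsetI)
      fix x assume "x \<in> S" then show "x \<in> {..Sup S}" by (simp add: Sup_upper)
    next
      fix x assume "x \<in> {..Sup S}" then show "x \<in> S" using down[OF True] by simp
    qed
    moreover have "{..Sup S} \<in> sets borel" by (rule borel_closed) simp
    ultimately show ?thesis by simp
  next
    case False
    have "S = {..<Sup S}"
    proof (intro equalityI subsetI)
      fix x assume "x \<in> S"
      then have "x \<le> Sup S" by (simp add: Sup_upper)
      moreover have "x \<noteq> Sup S" using False \<open>x \<in> S\<close> by blast
      ultimately show "x \<in> {..<Sup S}" by simp
    next
      fix x assume "x \<in> {..<Sup S}"
      then obtain y where "y \<in> S" "x < y" by (auto simp: less_Sup_iff)
      then show "x \<in> S" using down[of y x] by simp
    qed
    moreover have "{..<Sup S} \<in> sets borel" by (rule borel_open) simp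
    ultimately show ?thesis by simp
  qed
  then show "{x \<in> space borel. G x \<le> c} \<in> sets borel" by (simp add: S_def)
qed


locale mixsetup =
  fixes D :: "real measure measure" and q :: real
  assumes D_prob: "prob_space D" and D_sets: "sets D = sets (prob_algebra borel)"
    and D_atomless: "AE X in D. \<forall>x. measure X {x} = 0"
    and q0: "0 \<le> q" and q1: "q \<le> 1"
begin

sublocale D: prob_space D by (rule D_prob)

lemma space_D: "space D = space (prob_algebra borel)"
  using sets_eq_imp_space_eq[OF D_sets] .

lemma rdist_D: "X \<in> space D \<Longrightarrow> rdist X"
  unfolding rdist_def space_D space_prob_algebra by simp

lemma meas_cdf[measurable]: "(\<lambda>X. cdf_at X t) \<in> borel_measurable D"
  unfolding cdf_at_def measurable_cong_sets[OF D_sets refl]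
  by (rule measurable_measure_prob_algebra) simp

lemma cdf_bounds: "X \<in> space D \<Longrightarrow> 0 \<le> cdf_at X t \<and> cdf_at X t \<le> 1"
  using rdist.cdf_nonneg rdist.cdf_le1 rdist_D by blast

lemma integrable_bdd:
  fixes B :: real
  assumes "f \<in> borel_measurable D" "\<And>X. X \<in> space D \<Longrightarrow> \<bar>f X\<bar> \<le> B"
  shows "integrable D f"
  using assms by (intro D.integrable_const_bound[where B=B] AE_I2) auto

lemma integrable_cdf[simp]: "integrable D (\<lambda>X. cdf_at X t)"
  by (rule integrable_bdd[where B=1]) (simp, metis abs_of_nonneg cdf_bounds)

abbreviation "G \<equiv> mixture_cdf D"

lemma G_def: "G t = (\<integral>X. cdf_at X t \<partial>D)"
  by (simp add: mixture_cdf_def)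

lemma G_mono: "mono G"
proof (rule monoI)
  fix s t :: ereal assume st: "s \<le> t"
  show "G s \<le> G t" unfolding G_def
  proof (rule integral_mono)
    fix X assume "X \<in> space D"
    then interpret rdist X by (rule rdist_D)
    show "cdf_at X s \<le> cdf_at X t" using st by (rule cdf_mono)
  qed simp_all
qed

lemma G_mono': "s \<le> t \<Longrightarrow> G s \<le> G t"
  using G_mono by (simp add: mono_def)

lemma G_bot: "G (-\<infinity>) = 0"
proof -
  have "(\<integral>X. cdf_at X (-\<infinity>) \<partial>D) = (\<integral>X. 0 \<partial>D)"
  proof (rule Bochner_Integration.integral_cong)
    fix X assume "X \<in> space D"
    then interpret rdist X by (rule rdist_D)
    show "cdf_at X (-\<infinity>) = 0" by (rule cdf_bot)
  qed simp
  then show ?thesis by (simp add: G_def)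
qed

lemma G_top: "G \<infinity> = 1"
proof -
  have "(\<integral>X. cdf_at X \<infinity> \<partial>D) = (\<integral>X. 1 \<partial>D)"
  proof (rule Bochner_Integration.integral_cong)
    fix X assume "X \<in> space D"
    then interpret rdist X by (rule rdist_D)
    show "cdf_at X \<infinity> = 1" by (rule cdf_top)
  qed simp
  then show ?thesis by (simp add: G_def D.prob_space)
qed

lemma G_nonneg: "0 \<le> G t"
  unfolding G_def by (rule integral_nonneg_AE) (rule AE_I2, simp add: cdf_bounds)

lemma G_le1: "G t \<le> 1"
proof -
  have "G t \<le> G \<infinity>" by (rule G_mono') simp
  then show ?thesis by (simp add: G_top)
qed

lemma G_rc: "t \<noteq> \<infinity> \<Longrightarrow> (\<lambda>n. G (dn t n)) \<longlonglongrightarrow> G t"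
  unfolding G_def
proof (rule integral_dominated_convergence[where w="\<lambda>_. 1"])
  assume t: "t \<noteq> \<infinity>"
  show "AE X in D. (\<lambda>n. cdf_at X (dn t n)) \<longlonglongrightarrow> cdf_at X t"
  proof (rule AE_I2)
    fix X assume "X \<in> space D"
    then interpret rdist X by (rule rdist_D)
    show "(\<lambda>n. cdf_at X (dn t n)) \<longlonglongrightarrow> cdf_at X t" using t by (rule cdf_right)
  qed
  show "AE X in D. norm (cdf_at X (dn t n)) \<le> 1" for n
    by (rule AE_I2) (simp, metis abs_of_nonneg cdf_bounds)
qed simp_all

lemma G_lc: "t \<noteq> -\<infinity> \<Longrightarrow> (\<lambda>n. G (un t n)) \<longlonglongrightarrow> G t"
  unfolding G_def
proof (rule integral_dominated_convergence[where w="\<lambda>_. 1"])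
  assume t: "t \<noteq> -\<infinity>"
  show "AE X in D. (\<lambda>n. cdf_at X (un t n)) \<longlonglongrightarrow> cdf_at X t"
    using D_atomless
  proof (rule AE_mp[OF _ AE_I2], intro impI)
    fix X assume "X \<in> space D" "\<forall>x. measure X {x} = 0"
    then interpret rdist X by (intro rdist_D)
    show "(\<lambda>n. cdf_at X (un t n)) \<longlonglongrightarrow> cdf_at X t" using \<open>\<forall>x. measure X {x} = 0\<close> t by (rule cdf_left)
  qed
  show "AE X in D. norm (cdf_at X (un t n)) \<le> 1" for n
    by (rule AE_I2) (simp, metis abs_of_nonneg cdf_bounds)
qed simp_all

lemma G_quant: "0 \<le> c \<Longrightarrow> c \<le> 1 \<Longrightarrow> G (quantile G c) = c"
  by (rule quantile_exact[OF G_mono G_rc G_lc G_bot G_top])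

definition "N = quantile G q"

lemma G_N: "G N = q"
  unfolding N_def using G_quant q0 q1 .

lemma sigma_eq: "sigma_sq D q = (\<integral>X. (cdf_at X N - q)\<^sup>2 \<partial>D)"
  unfolding sigma_sq_def N_def[symmetric] using G_N by (simp add: G_def)

lemma sigma_nonneg: "0 \<le> sigma_sq D q"
  unfolding sigma_eq by simp

lemma sq_dev_bound: "X \<in> space D \<Longrightarrow> \<bar>(cdf_at X t - q)\<^sup>2\<bar> \<le> 1"
proof -
  assume "X \<in> space D"
  then have "0 \<le> cdf_at X t" "cdf_at X t \<le> 1" using cdf_bounds by auto
  then have "\<bar>cdf_at X t - q\<bar> \<le> 1" using q0 q1 by auto
  then show ?thesis by (simp add: abs_square_le_1)
qed

lemma sigma_le1: "sigma_sq D q \<le> 1"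
proof -
  have "(\<integral>X. (cdf_at X N - q)\<^sup>2 \<partial>D) \<le> (\<integral>X. 1 \<partial>D)"
  proof (rule integral_mono)
    show "integrable D (\<lambda>X. (cdf_at X N - q)\<^sup>2)"
      by (rule integrable_bdd[where B=1]) (simp, erule sq_dev_bound)
    fix X assume "X \<in> space D"
    then show "(cdf_at X N - q)\<^sup>2 \<le> 1" using sq_dev_bound[of X N] abs_le_D1 by blast
  qed simp
  then show ?thesis unfolding sigma_eq by (simp add: D.prob_space)
qed

end


context mixsetup
begin

abbreviation "P \<equiv> PiM (UNIV::nat set) (\<lambda>_. D)"

sublocale PS: sequence_space D
  by unfold_locales

lemma P_prob: "prob_space P"
  by (rule PS.prob_space_axioms)

lemma space_P_D: "\<omega> \<in> space P \<Longrightarrow> \<omega> i \<in> space D"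
  by (auto simp: space_PiM)

lemma comp_meas[measurable]: "(\<lambda>\<omega>. \<omega> i) \<in> P \<rightarrow>\<^sub>M D"
  by (rule measurable_component_singleton) simp

lemma distr_restrict: "distr P (PiM I (\<lambda>_. D)) (\<lambda>\<omega>. restrict \<omega> I) = PiM I (\<lambda>_. D)"
  using distr_PiM_reindex[of UNIV "\<lambda>_. D" id I] D.prob_space_axioms by simp

interpretation PSF: product_sigma_finite "\<lambda>_::nat. D"
  by (simp add: product_sigma_finite_def D.sigma_finite_measure_axioms)

lemma prod_integral:
  fixes g :: "nat \<Rightarrow> real measure \<Rightarrow> real"
  assumes I: "finite I" and g: "\<And>i. i \<in> I \<Longrightarrow> integrable D (g i)"
  shows "(\<integral>\<omega>. (\<Prod>i\<in>I. g i (\<omega> i)) \<partial>P) = (\<Prod>i\<in>I. integral\<^sup>L D (g i))"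
proof -
  have gm: "\<And>i. i \<in> I \<Longrightarrow> g i \<in> borel_measurable D" using g by auto
  have m: "(\<lambda>x. \<Prod>i\<in>I. g i (x i)) \<in> borel_measurable (PiM I (\<lambda>_. D))"
    using gm by (intro borel_measurable_prod) (auto intro: measurable_compose[OF measurable_component_singleton])
  have "(\<integral>\<omega>. (\<Prod>i\<in>I. g i (\<omega> i)) \<partial>P) = (\<integral>\<omega>. (\<Prod>i\<in>I. g i (restrict \<omega> I i)) \<partial>P)"
    by (intro Bochner_Integration.integral_cong refl prod.cong) auto
  also have "\<dots> = (\<integral>x. (\<Prod>i\<in>I. g i (x i)) \<partial>distr P (PiM I (\<lambda>_. D)) (\<lambda>\<omega>. restrict \<omega> I))"
    by (rule integral_distr[symmetric, OF _ m]) (rule measurable_restrict_subset, simp)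
  also have "\<dots> = (\<integral>x. (\<Prod>i\<in>I. g i (x i)) \<partial>PiM I (\<lambda>_. D))"
    by (simp add: distr_restrict)
  also have "\<dots> = (\<Prod>i\<in>I. integral\<^sup>L D (g i))"
    by (rule PS.product_integral_prod[OF I g])
  finally show ?thesis .
qed

lemma single_integral:
  fixes f :: "real measure \<Rightarrow> real"
  assumes f: "integrable D f"
  shows "(\<integral>\<omega>. f (\<omega> i) \<partial>P) = integral\<^sup>L D f"
  using prod_integral[of "{i}" "\<lambda>_. f"] f by simp

lemma pair_integral:
  fixes f g :: "real measure \<Rightarrow> real"
  assumes f: "integrable D f" and g: "integrable D g" and ij: "i \<noteq> j"
  shows "(\<integral>\<omega>. f (\<omega> i) * g (\<omega> j) \<partial>P) = integral\<^sup>L D f * integral\<^sup>L D g"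
  using prod_integral[of "{i,j}" "\<lambda>k. if k = i then f else g"] f g ij by simp

end


lemma exp_half_bound:
  fixes y :: real assumes "0 \<le> y" "y \<le> 1"
  shows "exp (- y / 2) \<le> 1 - y / 3"
proof -
  have cv: "convex_on UNIV (\<lambda>x::real. exp (1 * x))" by (rule convex_on_exp) simp
  have "exp ((1 - y) *\<^sub>R 0 + y *\<^sub>R (-1/2)) \<le> (1 - y) * exp (1 * 0) + y * exp (1 * (-1/2::real))"
    using convex_onD[OF cv, of y 0 "-1/2"] assms by simp
  then have a: "exp (- y / 2) \<le> (1 - y) + y * exp (-1/2)" by simp
  have "3/2 \<le> exp (1/2::real)" using exp_ge_add_one_self[of "1/2"] by simp
  then have "exp (-1/2::real) \<le> 2/3"
    by (simp add: exp_minus field_simps)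
  then have "y * exp (-1/2) \<le> y * (2/3)" using assms by (intro mult_left_mono) auto
  with a show ?thesis by simp
qed

context mixsetup
begin

lemma PP_fm: "finite_measure P"
  using P_prob by (simp add: prob_space_def)

lemma cheb_sum:
  fixes f :: "real measure \<Rightarrow> real"
  assumes f[measurable]: "f \<in> borel_measurable D" and fb: "\<And>X. X \<in> space D \<Longrightarrow> 0 \<le> f X \<and> f X \<le> 1"
    and I: "finite I" and a: "0 < a"
  shows "measure P {\<omega> \<in> space P. a \<le> \<bar>\<Sum>i\<in>I. (f (\<omega> i) - integral\<^sup>L D f)\<bar>}
      \<le> card I * (\<integral>X. (f X - integral\<^sup>L D f)\<^sup>2 \<partial>D) / a\<^sup>2"
proof -
  define \<mu> where "\<mu> = integral\<^sup>L D f"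
  define v where "v = (\<integral>X. (f X - \<mu>)\<^sup>2 \<partial>D)"
  have intf: "integrable D f"
    by (rule integrable_bdd[where B=1]) (auto dest: fb)
  have \<mu>b: "0 \<le> \<mu> \<and> \<mu> \<le> 1"
  proof
    show "0 \<le> \<mu>" unfolding \<mu>_def by (rule integral_nonneg_AE) (auto intro!: AE_I2 dest: fb)
    have "\<mu> \<le> (\<integral>X. 1 \<partial>D)" unfolding \<mu>_def by (rule integral_mono) (auto dest: fb simp: intf)
    then show "\<mu> \<le> 1" by (simp add: D.prob_space)
  qed
  have Zb: "\<bar>f X - \<mu>\<bar> \<le> 1" if "X \<in> space D" for X using fb[OF that] \<mu>b by auto
  have intZ: "integrable D (\<lambda>X. f X - \<mu>)"
    by (rule integrable_bdd[where B=1]) (auto dest: Zb)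
  have intZ2: "integrable D (\<lambda>X. (f X - \<mu>)\<^sup>2)"
    by (rule integrable_bdd[where B=1]) (auto simp: abs_square_le_1 dest: Zb)
  have intZ0: "integral\<^sup>L D (\<lambda>X. f X - \<mu>) = 0"
    using intf by (simp add: \<mu>_def D.prob_space)
  define S where "S \<omega> = (\<Sum>i\<in>I. (f (\<omega> i) - \<mu>))" for \<omega> :: "nat \<Rightarrow> real measure"
  have Sm[measurable]: "S \<in> borel_measurable P" unfolding S_def by measurable
  have Sb: "\<bar>S \<omega>\<bar> \<le> card I" if "\<omega> \<in> space P" for \<omega>
  proof -
    have "\<bar>S \<omega>\<bar> \<le> (\<Sum>i\<in>I. \<bar>f (\<omega> i) - \<mu>\<bar>)" unfolding S_def by (rule sum_abs)
    also have "\<dots> \<le> (\<Sum>i\<in>I. 1)" by (intro sum_mono Zb space_P_D that)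
    finally show ?thesis by simp
  qed
  have intS2: "integrable P (\<lambda>\<omega>. (S \<omega>)\<^sup>2)"
  proof (rule finite_measure.integrable_const_bound[where B="(real (card I))\<^sup>2", OF PP_fm])
    show "AE \<omega> in P. norm ((S \<omega>)\<^sup>2) \<le> (real (card I))\<^sup>2"
    proof (rule AE_I2)
      fix \<omega> assume "\<omega> \<in> space P"
      then have "\<bar>S \<omega>\<bar> \<le> card I" by (rule Sb)
      then have "\<bar>S \<omega>\<bar>\<^sup>2 \<le> (real (card I))\<^sup>2" by (intro power_mono) auto
      then show "norm ((S \<omega>)\<^sup>2) \<le> (real (card I))\<^sup>2" by simp
    qed
  qed simp
  have cross: "(\<integral>\<omega>. (f (\<omega> i) - \<mu>) * (f (\<omega> j) - \<mu>) \<partial>P) = (if i = j then v else 0)" for i j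
  proof (cases "i = j")
    case True
    then show ?thesis
      using single_integral[OF intZ2, of i] by (simp add: v_def power2_eq_square)
  next
    case False
    then show ?thesis
      using pair_integral[OF intZ intZ False] intZ0 by simp
  qed
  have intcross: "integrable P (\<lambda>\<omega>. (f (\<omega> i) - \<mu>) * (f (\<omega> j) - \<mu>))" for i j
  proof (rule finite_measure.integrable_const_bound[where B=1, OF PP_fm])
    show "AE \<omega> in P. norm ((f (\<omega> i) - \<mu>) * (f (\<omega> j) - \<mu>)) \<le> 1"
    proof (rule AE_I2)
      fix \<omega> assume w: "\<omega> \<in> space P"
      have "\<bar>f (\<omega> i) - \<mu>\<bar> * \<bar>f (\<omega> j) - \<mu>\<bar> \<le> 1 * 1"
        using Zb[OF space_P_D[OF w]] by (intro mult_mono) auto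
      then show "norm ((f (\<omega> i) - \<mu>) * (f (\<omega> j) - \<mu>)) \<le> 1" by (simp add: abs_mult)
    qed
  qed simp
  have ES2: "(\<integral>\<omega>. (S \<omega>)\<^sup>2 \<partial>P) = card I * v"
  proof -
    have "(\<integral>\<omega>. (S \<omega>)\<^sup>2 \<partial>P) = (\<integral>\<omega>. (\<Sum>i\<in>I. \<Sum>j\<in>I. (f (\<omega> i) - \<mu>) * (f (\<omega> j) - \<mu>)) \<partial>P)"
      unfolding S_def power2_eq_square by (simp add: sum_product)
    also have "\<dots> = (\<Sum>i\<in>I. \<Sum>j\<in>I. (\<integral>\<omega>. (f (\<omega> i) - \<mu>) * (f (\<omega> j) - \<mu>) \<partial>P))"
      by (simp add: Bochner_Integration.integral_sum intcross)
    also have "\<dots> = (\<Sum>i\<in>I. \<Sum>j\<in>I. (if i = j then v else 0))"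
      by (simp add: cross)
    also have "\<dots> = card I * v" using I by simp
    finally show ?thesis .
  qed
  have eq: "{\<omega> \<in> space P. a \<le> \<bar>S \<omega>\<bar>} = {\<omega> \<in> space P. a\<^sup>2 \<le> (S \<omega>)\<^sup>2}"
    using a by (auto simp: abs_le_square_iff[symmetric])
  have "measure P {\<omega> \<in> space P. a\<^sup>2 \<le> (S \<omega>)\<^sup>2} \<le> (\<integral>\<omega>. (S \<omega>)\<^sup>2 \<partial>P) / a\<^sup>2"
    by (rule integral_Markov_inequality_measure[where A="space P"]) (use intS2 a in auto)
  then show ?thesis using eq ES2 by (simp add: S_def \<mu>_def v_def)
qed

lemma chernoff_sum:
  fixes f :: "real measure \<Rightarrow> real"
  assumes f[measurable]: "f \<in> borel_measurable D" and fb: "\<And>X. X \<in> space D \<Longrightarrow> 0 \<le> f X \<and> f X \<le> 1"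
    and I: "finite I"
  shows "measure P {\<omega> \<in> space P. (\<Sum>i\<in>I. f (\<omega> i)) \<le> card I * integral\<^sup>L D f / 2}
      \<le> exp (- (card I * integral\<^sup>L D f / 12))"
proof -
  define \<mu> where "\<mu> = integral\<^sup>L D f"
  define T where "T = real (card I)"
  have intf: "integrable D f"
    by (rule integrable_bdd[where B=1]) (auto dest: fb)
  define u where "u \<omega> = (\<Prod>i\<in>I. exp (- f (\<omega> i) / 2))" for \<omega> :: "nat \<Rightarrow> real measure"
  have um[measurable]: "u \<in> borel_measurable P" unfolding u_def by measurable
  have ue: "u \<omega> = exp (- (\<Sum>i\<in>I. f (\<omega> i)) / 2)" for \<omega>
  proof -
    have "exp (- (\<Sum>i\<in>I. f (\<omega> i)) / 2) = exp (\<Sum>i\<in>I. - f (\<omega> i) / 2)"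
      by (simp add: sum_negf sum_divide_distrib)
    also have "\<dots> = u \<omega>" unfolding u_def by (rule exp_sum[OF I])
    finally show ?thesis by simp
  qed
  have inte: "integrable D (\<lambda>X. exp (- f X / 2))"
    by (rule integrable_bdd[where B=1]) (auto dest: fb)
  have intu: "integrable P u"
  proof (rule finite_measure.integrable_const_bound[where B=1, OF PP_fm])
    show "AE \<omega> in P. norm (u \<omega>) \<le> 1"
    proof (rule AE_I2)
      fix \<omega> assume w: "\<omega> \<in> space P"
      have "(\<Sum>i\<in>I. f (\<omega> i)) \<ge> 0" using fb space_P_D[OF w] by (intro sum_nonneg) auto
      then show "norm (u \<omega>) \<le> 1" unfolding ue by simp
    qed
  qed simp
  have Ee: "(\<integral>X. exp (- f X / 2) \<partial>D) \<le> exp (- \<mu> / 3)"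
  proof -
    have "(\<integral>X. exp (- f X / 2) \<partial>D) \<le> (\<integral>X. 1 - f X / 3 \<partial>D)"
    proof (rule integral_mono)
      show "integrable D (\<lambda>X. exp (- f X / 2))" by (rule inte)
      show "integrable D (\<lambda>X. 1 - f X / 3)" using intf by simp
      fix X assume "X \<in> space D"
      then show "exp (- f X / 2) \<le> 1 - f X / 3" using fb by (intro exp_half_bound) auto
    qed
    also have "\<dots> = 1 - \<mu> / 3" using intf by (simp add: \<mu>_def D.prob_space)
    also have "\<dots> \<le> exp (- \<mu> / 3)" using exp_ge_add_one_self[of "- \<mu> / 3"] by simp
    finally show ?thesis .
  qed
  have Eu: "(\<integral>\<omega>. u \<omega> \<partial>P) \<le> exp (- T * \<mu> / 3)"
  proof -
    have "(\<integral>\<omega>. u \<omega> \<partial>P) = (\<Prod>i\<in>I. (\<integral>X. exp (- f X / 2) \<partial>D))"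
      unfolding u_def by (rule prod_integral[OF I]) (rule inte)
    also have "\<dots> \<le> (\<Prod>i\<in>I. exp (- \<mu> / 3))"
      by (intro prod_mono conjI Ee integral_nonneg_AE AE_I2) auto
    also have "\<dots> = exp (- T * \<mu> / 3)"
      by (simp add: T_def exp_of_nat_mult[symmetric])
    finally show ?thesis .
  qed
  have sub: "{\<omega> \<in> space P. (\<Sum>i\<in>I. f (\<omega> i)) \<le> T * \<mu> / 2} \<subseteq> {\<omega> \<in> space P. exp (- T * \<mu> / 4) \<le> u \<omega>}"
    unfolding ue by auto
  have "measure P {\<omega> \<in> space P. (\<Sum>i\<in>I. f (\<omega> i)) \<le> T * \<mu> / 2}
      \<le> measure P {\<omega> \<in> space P. exp (- T * \<mu> / 4) \<le> u \<omega>}"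
    by (rule finite_measure.finite_measure_mono[OF PP_fm sub]) measurable
  also have "\<dots> \<le> (\<integral>\<omega>. u \<omega> \<partial>P) / exp (- T * \<mu> / 4)"
    by (rule integral_Markov_inequality_measure[where A="space P"]) (fact intu, simp, rule AE_I2, simp add: ue, simp)
  also have "\<dots> \<le> exp (- T * \<mu> / 3) / exp (- T * \<mu> / 4)"
    by (intro divide_right_mono Eu) simp
  also have "\<dots> = exp (- (T * \<mu> / 12))"
    by (simp add: exp_diff[symmetric])
  finally show ?thesis by (simp add: T_def \<mu>_def)
qed

end


lemma exp_neg_sq_bound: fixes x :: real assumes "0 < x" shows "exp (- x) \<le> 4 / x\<^sup>2"
proof -
  have "1 + x / 2 \<le> exp (x / 2)" by (rule exp_ge_add_one_self)
  then have "x / 2 \<le> exp (x / 2)" by linarith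
  then have "(x / 2)\<^sup>2 \<le> (exp (x / 2))\<^sup>2" using assms by (intro power_mono) auto
  also have "\<dots> = exp x" by (simp add: power2_eq_square exp_add[symmetric])
  finally have "x\<^sup>2 / 4 \<le> exp x" by (simp add: power_divide)
  then show ?thesis using assms by (simp add: exp_minus field_simps)
qed

context mixsetup
begin

definition "Qh \<omega> I = quantile (unif_mixture_cdf \<omega> I) q"

lemma rdist_P: "\<omega> \<in> space P \<Longrightarrow> rdist (\<omega> i)"
  by (rule rdist_D[OF space_P_D])

lemma umc_empty: "unif_mixture_cdf \<omega> {} = (\<lambda>_. 0)"
  by (rule ext) (simp add: unif_mixture_cdf_def)

lemma umc_mono: assumes w: "\<omega> \<in> space P" shows "mono (unif_mixture_cdf \<omega> I)"
proof (rule monoI)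
  fix x y :: ereal assume xy: "x \<le> y"
  have "(\<Sum>i\<in>I. cdf_at (\<omega> i) x) \<le> (\<Sum>i\<in>I. cdf_at (\<omega> i) y)"
  proof (rule sum_mono)
    fix i
    interpret rdist "\<omega> i" by (rule rdist_P[OF w])
    show "cdf_at (\<omega> i) x \<le> cdf_at (\<omega> i) y" using xy by (rule cdf_mono)
  qed
  then show "unif_mixture_cdf \<omega> I x \<le> unif_mixture_cdf \<omega> I y"
    unfolding unif_mixture_cdf_def by (rule divide_right_mono) simp
qed

lemma umc_rc: assumes w: "\<omega> \<in> space P" and t: "t \<noteq> \<infinity>"
  shows "(\<lambda>n. unif_mixture_cdf \<omega> I (dn t n)) \<longlonglongrightarrow> unif_mixture_cdf \<omega> I t"
proof -
  have "(\<lambda>n. \<Sum>i\<in>I. cdf_at (\<omega> i) (dn t n)) \<longlonglongrightarrow> (\<Sum>i\<in>I. cdf_at (\<omega> i) t)"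
  proof (rule tendsto_sum)
    fix i
    interpret rdist "\<omega> i" by (rule rdist_P[OF w])
    show "(\<lambda>n. cdf_at (\<omega> i) (dn t n)) \<longlonglongrightarrow> cdf_at (\<omega> i) t" using t by (rule cdf_right)
  qed
  then have "(\<lambda>n. (\<Sum>i\<in>I. cdf_at (\<omega> i) (dn t n)) * inverse (card I)) \<longlonglongrightarrow> (\<Sum>i\<in>I. cdf_at (\<omega> i) t) * inverse (card I)"
    by (rule tendsto_mult_right)
  then show ?thesis unfolding unif_mixture_cdf_def by (simp add: divide_inverse)
qed

lemma umc_top: assumes w: "\<omega> \<in> space P" and I: "finite I" "I \<noteq> {}"
  shows "unif_mixture_cdf \<omega> I \<infinity> = 1"
proof -
  have "(\<Sum>i\<in>I. cdf_at (\<omega> i) \<infinity>) = (\<Sum>i\<in>I. 1)"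
  proof (rule sum.cong[OF refl])
    fix i
    interpret rdist "\<omega> i" by (rule rdist_P[OF w])
    show "cdf_at (\<omega> i) \<infinity> = 1" by (rule cdf_top)
  qed
  then show ?thesis using I by (simp add: unif_mixture_cdf_def)
qed

lemma Qh_le_iff: "\<omega> \<in> space P \<Longrightarrow> finite I \<Longrightarrow> I \<noteq> {} \<Longrightarrow> Qh \<omega> I \<le> t \<longleftrightarrow> q \<le> unif_mixture_cdf \<omega> I t"
  unfolding Qh_def
  by (rule quantile_le_iff(2)[OF umc_mono umc_rc]) (auto simp: umc_top q1)

lemma umc_meas[measurable]: "(\<lambda>\<omega>. unif_mixture_cdf \<omega> I t) \<in> borel_measurable P"
  unfolding unif_mixture_cdf_def by measurable

lemma Qh_meas[measurable]: "finite I \<Longrightarrow> (\<lambda>\<omega>. Qh \<omega> I) \<in> borel_measurable P"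
proof (cases "I = {}")
  case True
  then show ?thesis by (simp add: Qh_def umc_empty)
next
  case False
  assume I: "finite I"
  show ?thesis
  proof (rule borel_measurableI_le)
    fix t
    have "{\<omega> \<in> space P. Qh \<omega> I \<le> t} = {\<omega> \<in> space P. q \<le> unif_mixture_cdf \<omega> I t}"
      using Qh_le_iff[OF _ I False] by auto
    also have "\<dots> \<in> sets P" by measurable
    finally show "{\<omega> \<in> space P. Qh \<omega> I \<le> t} \<in> sets P" .
  qed
qed

lemma GQh_meas[measurable]: "finite I \<Longrightarrow> (\<lambda>\<omega>. G (Qh \<omega> I)) \<in> borel_measurable P"
  by (rule measurable_compose[OF Qh_meas mono_ereal_borel[OF G_mono]])

abbreviation "\<sigma>2 \<equiv> sigma_sq D q"

lemma N_le: "G t \<ge> q \<Longrightarrow> N \<le> t"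
  unfolding N_def by (rule quantile_le_iff(2)[OF G_mono G_rc, THEN iffD2]) (auto simp: G_top q1)

lemma cdf_N_meas[measurable]: "(\<lambda>X. cdf_at X N) \<in> borel_measurable D" by simp

lemma int_cdfN: "integral\<^sup>L D (\<lambda>X. cdf_at X N) = q"
  using G_N by (simp add: G_def)

lemma cheb_N:
  assumes I: "finite I" and a: "0 < a"
  shows "measure P {\<omega> \<in> space P. a \<le> \<bar>\<Sum>i\<in>I. (cdf_at (\<omega> i) N - q)\<bar>} \<le> card I * \<sigma>2 / a\<^sup>2"
  using cheb_sum[of "\<lambda>X. cdf_at X N", OF cdf_N_meas _ I a] cdf_bounds
  by (simp add: int_cdfN sigma_eq)

lemma upper_tail:
  fixes \<delta> :: real
  assumes I: "finite I" "I \<noteq> {}" and d: "0 < \<delta>"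
  shows "measure P {\<omega> \<in> space P. q + \<delta> < G (Qh \<omega> I)} \<le> 4 * \<sigma>2 / (card I * \<delta>\<^sup>2) + exp (- (card I * \<delta> / 12))"
proof (cases "q + \<delta> \<le> 1")
  case False
  have "\<not> q + \<delta> < G t" for t using False G_le1[of t] by linarith
  then have e: "{\<omega> \<in> space P. q + \<delta> < G (Qh \<omega> I)} = {}" by auto
  have "0 \<le> 4 * \<sigma>2 / (card I * \<delta>\<^sup>2)" using sigma_nonneg by simp
  then show ?thesis unfolding e by (smt (verit) exp_gt_zero measure_empty)
next
  case True
  define T where "T = real (card I)"
  have T: "0 < T" using I by (simp add: T_def card_gt_0_iff)
  define tp where "tp = quantile G (q + \<delta>)"
  have Gtp: "G tp = q + \<delta>" unfolding tp_def using True q0 d by (intro G_quant) auto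
  have Ntp: "N \<le> tp" using Gtp d by (intro N_le) simp
  define B where "B X = cdf_at X tp - cdf_at X N" for X
  have Bm[measurable]: "B \<in> borel_measurable D" unfolding B_def by simp
  have Bb: "0 \<le> B X \<and> B X \<le> 1" if "X \<in> space D" for X
  proof -
    interpret rdist X using that by (rule rdist_D)
    show ?thesis using cdf_mono[OF Ntp] cdf_nonneg[of N] cdf_le1[of tp] by (simp add: B_def)
  qed
  have intB: "integral\<^sup>L D B = \<delta>"
    unfolding B_def by (simp add: G_def[symmetric] Gtp G_N)
  have sub: "{\<omega> \<in> space P. q + \<delta> < G (Qh \<omega> I)} \<subseteq>
      {\<omega> \<in> space P. T * \<delta> / 2 \<le> \<bar>\<Sum>i\<in>I. (cdf_at (\<omega> i) N - q)\<bar>} \<union>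
      {\<omega> \<in> space P. (\<Sum>i\<in>I. B (\<omega> i)) \<le> card I * integral\<^sup>L D B / 2}"
  proof safe
    fix \<omega> assume w: "\<omega> \<in> space P" and lt: "q + \<delta> < G (Qh \<omega> I)"
      and nB: "\<not> (\<Sum>i\<in>I. B (\<omega> i)) \<le> card I * integral\<^sup>L D B / 2"
    have "\<not> Qh \<omega> I \<le> tp" using lt Gtp G_mono' by (metis not_le)
    then have "unif_mixture_cdf \<omega> I tp < q" using Qh_le_iff[OF w I] by simp
    then have "(\<Sum>i\<in>I. cdf_at (\<omega> i) tp) < T * q"
      using T by (simp add: unif_mixture_cdf_def T_def field_simps)
    moreover have "(\<Sum>i\<in>I. cdf_at (\<omega> i) tp) = (\<Sum>i\<in>I. (cdf_at (\<omega> i) N - q)) + (\<Sum>i\<in>I. B (\<omega> i)) + T * q"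
      by (simp add: B_def sum.distrib sum_subtractf T_def)
    moreover have "T * \<delta> / 2 < (\<Sum>i\<in>I. B (\<omega> i))" using nB intB by (simp add: T_def)
    ultimately have "(\<Sum>i\<in>I. (cdf_at (\<omega> i) N - q)) < - (T * \<delta> / 2)" by simp
    then show "T * \<delta> / 2 \<le> \<bar>\<Sum>i\<in>I. (cdf_at (\<omega> i) N - q)\<bar>" by simp
  qed
  have "measure P {\<omega> \<in> space P. q + \<delta> < G (Qh \<omega> I)} \<le>
      measure P ({\<omega> \<in> space P. T * \<delta> / 2 \<le> \<bar>\<Sum>i\<in>I. (cdf_at (\<omega> i) N - q)\<bar>} \<union>
      {\<omega> \<in> space P. (\<Sum>i\<in>I. B (\<omega> i)) \<le> card I * integral\<^sup>L D B / 2})"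
    by (rule finite_measure.finite_measure_mono[OF PP_fm sub]) (use I in measurable)
  also have "\<dots> \<le> measure P {\<omega> \<in> space P. T * \<delta> / 2 \<le> \<bar>\<Sum>i\<in>I. (cdf_at (\<omega> i) N - q)\<bar>} +
      measure P {\<omega> \<in> space P. (\<Sum>i\<in>I. B (\<omega> i)) \<le> card I * integral\<^sup>L D B / 2}"
    by (rule measure_Un_le) (use I in measurable)
  also have "\<dots> \<le> card I * \<sigma>2 / (T * \<delta> / 2)\<^sup>2 + exp (- (card I * integral\<^sup>L D B / 12))"
    by (intro add_mono cheb_N chernoff_sum Bm Bb I) (use T d in auto)
  also have "card I * \<sigma>2 / (T * \<delta> / 2)\<^sup>2 = 4 * \<sigma>2 / (card I * \<delta>\<^sup>2)"
    using T d by (simp add: T_def power2_eq_square field_simps)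
  finally show ?thesis by (simp add: intB)
qed

lemma lower_tail:
  fixes \<delta> :: real
  assumes I: "finite I" "I \<noteq> {}" and d: "0 < \<delta>"
  shows "measure P {\<omega> \<in> space P. G (Qh \<omega> I) < q - \<delta>} \<le> 4 * \<sigma>2 / (card I * \<delta>\<^sup>2) + exp (- (card I * \<delta> / 12))"
proof (cases "0 \<le> q - \<delta>")
  case False
  have "\<not> G t < q - \<delta>" for t using False G_nonneg[of t] by linarith
  then have e: "{\<omega> \<in> space P. G (Qh \<omega> I) < q - \<delta>} = {}" by auto
  have "0 \<le> 4 * \<sigma>2 / (card I * \<delta>\<^sup>2)" using sigma_nonneg by simp
  then show ?thesis unfolding e by (smt (verit) exp_gt_zero measure_empty)
next
  case True
  define T where "T = real (card I)"
  have T: "0 < T" using I by (simp add: T_def card_gt_0_iff)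
  define tm where "tm = quantile G (q - \<delta>)"
  have Gtm: "G tm = q - \<delta>" unfolding tm_def using True q1 d by (intro G_quant) auto
  have Ntm: "tm \<le> N" unfolding tm_def
    by (rule quantile_le_iff(2)[OF G_mono G_rc, THEN iffD2]) (use d q1 in \<open>auto simp: G_top G_N\<close>)
  define B where "B X = cdf_at X N - cdf_at X tm" for X
  have Bm[measurable]: "B \<in> borel_measurable D" unfolding B_def by simp
  have Bb: "0 \<le> B X \<and> B X \<le> 1" if "X \<in> space D" for X
  proof -
    interpret rdist X using that by (rule rdist_D)
    show ?thesis using cdf_mono[OF Ntm] cdf_nonneg[of tm] cdf_le1[of N] by (simp add: B_def)
  qed
  have intB: "integral\<^sup>L D B = \<delta>"
    unfolding B_def by (simp add: G_def[symmetric] Gtm G_N)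
  have sub: "{\<omega> \<in> space P. G (Qh \<omega> I) < q - \<delta>} \<subseteq>
      {\<omega> \<in> space P. T * \<delta> / 2 \<le> \<bar>\<Sum>i\<in>I. (cdf_at (\<omega> i) N - q)\<bar>} \<union>
      {\<omega> \<in> space P. (\<Sum>i\<in>I. B (\<omega> i)) \<le> card I * integral\<^sup>L D B / 2}"
  proof safe
    fix \<omega> assume w: "\<omega> \<in> space P" and lt: "G (Qh \<omega> I) < q - \<delta>"
      and nB: "\<not> (\<Sum>i\<in>I. B (\<omega> i)) \<le> card I * integral\<^sup>L D B / 2"
    have "Qh \<omega> I \<le> tm"
    proof (rule ccontr)
      assume "\<not> Qh \<omega> I \<le> tm"
      then have "G tm \<le> G (Qh \<omega> I)" by (intro G_mono') simp
      with lt Gtm show False by simp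
    qed
    then have "q \<le> unif_mixture_cdf \<omega> I tm" using Qh_le_iff[OF w I] by simp
    then have "T * q \<le> (\<Sum>i\<in>I. cdf_at (\<omega> i) tm)"
      using T by (simp add: unif_mixture_cdf_def T_def field_simps)
    moreover have "(\<Sum>i\<in>I. cdf_at (\<omega> i) tm) = (\<Sum>i\<in>I. (cdf_at (\<omega> i) N - q)) - (\<Sum>i\<in>I. B (\<omega> i)) + T * q"
      by (simp add: B_def sum.distrib sum_subtractf T_def)
    moreover have "T * \<delta> / 2 < (\<Sum>i\<in>I. B (\<omega> i))" using nB intB by (simp add: T_def)
    ultimately have "T * \<delta> / 2 < (\<Sum>i\<in>I. (cdf_at (\<omega> i) N - q))" by simp
    then show "T * \<delta> / 2 \<le> \<bar>\<Sum>i\<in>I. (cdf_at (\<omega> i) N - q)\<bar>" by simp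
  qed
  have "measure P {\<omega> \<in> space P. G (Qh \<omega> I) < q - \<delta>} \<le>
      measure P ({\<omega> \<in> space P. T * \<delta> / 2 \<le> \<bar>\<Sum>i\<in>I. (cdf_at (\<omega> i) N - q)\<bar>} \<union>
      {\<omega> \<in> space P. (\<Sum>i\<in>I. B (\<omega> i)) \<le> card I * integral\<^sup>L D B / 2})"
    by (rule finite_measure.finite_measure_mono[OF PP_fm sub]) (use I in measurable)
  also have "\<dots> \<le> measure P {\<omega> \<in> space P. T * \<delta> / 2 \<le> \<bar>\<Sum>i\<in>I. (cdf_at (\<omega> i) N - q)\<bar>} +
      measure P {\<omega> \<in> space P. (\<Sum>i\<in>I. B (\<omega> i)) \<le> card I * integral\<^sup>L D B / 2}"
    by (rule measure_Un_le) (use I in measurable)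
  also have "\<dots> \<le> card I * \<sigma>2 / (T * \<delta> / 2)\<^sup>2 + exp (- (card I * integral\<^sup>L D B / 12))"
    by (intro add_mono cheb_N chernoff_sum Bm Bb I) (use T d in auto)
  also have "card I * \<sigma>2 / (T * \<delta> / 2)\<^sup>2 = 4 * \<sigma>2 / (card I * \<delta>\<^sup>2)"
    using T d by (simp add: T_def power2_eq_square field_simps)
  finally show ?thesis by (simp add: intB)
qed

lemma tail:
  fixes \<delta> :: real
  assumes I: "finite I" "I \<noteq> {}" and d: "0 < \<delta>"
  shows "measure P {\<omega> \<in> space P. \<delta> < \<bar>G (Qh \<omega> I) - q\<bar>} \<le> (8 * \<sigma>2 * card I + 1152) / ((card I)\<^sup>2 * \<delta>\<^sup>2)"
proof -
  define T where "T = real (card I)"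
  have T: "0 < T" using I by (simp add: T_def card_gt_0_iff)
  have "{\<omega> \<in> space P. \<delta> < \<bar>G (Qh \<omega> I) - q\<bar>} = {\<omega> \<in> space P. q + \<delta> < G (Qh \<omega> I)} \<union> {\<omega> \<in> space P. G (Qh \<omega> I) < q - \<delta>}"
    by auto
  then have "measure P {\<omega> \<in> space P. \<delta> < \<bar>G (Qh \<omega> I) - q\<bar>} \<le>
     measure P {\<omega> \<in> space P. q + \<delta> < G (Qh \<omega> I)} + measure P {\<omega> \<in> space P. G (Qh \<omega> I) < q - \<delta>}"
    using measure_Un_le[where M=P and A="{\<omega> \<in> space P. q + \<delta> < G (Qh \<omega> I)}" and B="{\<omega> \<in> space P. G (Qh \<omega> I) < q - \<delta>}"] I
    by simp
  also have "\<dots> \<le> 2 * (4 * \<sigma>2 / (T * \<delta>\<^sup>2) + exp (- (T * \<delta> / 12)))"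
    unfolding T_def by (rule order.trans[OF add_mono[OF upper_tail[OF I d] lower_tail[OF I d]]]) simp
  also have "exp (- (T * \<delta> / 12)) \<le> 4 / (T * \<delta> / 12)\<^sup>2"
    by (rule exp_neg_sq_bound) (use T d in simp)
  also have "2 * (4 * \<sigma>2 / (T * \<delta>\<^sup>2) + 4 / (T * \<delta> / 12)\<^sup>2) = (8 * \<sigma>2 * T + 1152) / (T\<^sup>2 * \<delta>\<^sup>2)"
    using T d by (simp add: field_simps power2_eq_square)
  finally show ?thesis by (simp add: T_def)
qed

end


context mixsetup
begin

lemma sfP: "sigma_finite_measure P"
  by (rule prob_space_imp_sigma_finite[OF P_prob])

lemma comb_meas[measurable]: "(\<lambda>(\<alpha>, \<beta>). comb_seq n \<alpha> \<beta>) \<in> P \<Otimes>\<^sub>M P \<rightarrow>\<^sub>M P"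
  by (rule measurable_comb_seq)

lemma split_nn:
  fixes f :: "(nat \<Rightarrow> real measure) \<Rightarrow> ennreal"
  assumes f[measurable]: "f \<in> borel_measurable P"
  shows "(\<integral>\<^sup>+\<omega>. f \<omega> \<partial>P) = (\<integral>\<^sup>+\<alpha>. (\<integral>\<^sup>+\<beta>. f (comb_seq n \<alpha> \<beta>) \<partial>P) \<partial>P)"
proof -
  have "(\<integral>\<^sup>+\<omega>. f \<omega> \<partial>P) = (\<integral>\<^sup>+\<omega>. f \<omega> \<partial>distr (P \<Otimes>\<^sub>M P) P (\<lambda>(\<omega>, \<omega>'). comb_seq n \<omega> \<omega>'))"
    by (simp add: PS.PiM_comb_seq)
  also have "\<dots> = (\<integral>\<^sup>+x. f ((\<lambda>(\<omega>, \<omega>'). comb_seq n \<omega> \<omega>') x) \<partial>(P \<Otimes>\<^sub>M P))"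
    by (rule nn_integral_distr) measurable
  also have "\<dots> = (\<integral>\<^sup>+\<alpha>. (\<integral>\<^sup>+\<beta>. f (comb_seq n \<alpha> \<beta>) \<partial>P) \<partial>P)"
    by (subst sigma_finite_measure.nn_integral_fst[OF sfP, symmetric])
       (rule measurable_compose[OF comb_meas f], simp)
  finally show ?thesis .
qed

lemma split_emeasure:
  assumes A[measurable]: "A \<in> sets P"
  shows "emeasure P A = (\<integral>\<^sup>+\<alpha>. emeasure P {\<beta> \<in> space P. comb_seq n \<alpha> \<beta> \<in> A} \<partial>P)"
proof -
  have "emeasure P A = (\<integral>\<^sup>+\<omega>. indicator A \<omega> \<partial>P)" by simp
  also have "\<dots> = (\<integral>\<^sup>+\<alpha>. (\<integral>\<^sup>+\<beta>. indicator A (comb_seq n \<alpha> \<beta>) \<partial>P) \<partial>P)"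
    by (rule split_nn) simp
  also have "\<dots> = (\<integral>\<^sup>+\<alpha>. emeasure P {\<beta> \<in> space P. comb_seq n \<alpha> \<beta> \<in> A} \<partial>P)"
  proof (rule nn_integral_cong)
    fix \<alpha> assume a: "\<alpha> \<in> space P"
    have "(\<integral>\<^sup>+\<beta>. indicator A (comb_seq n \<alpha> \<beta>) \<partial>P) = (\<integral>\<^sup>+\<beta>. indicator {\<beta> \<in> space P. comb_seq n \<alpha> \<beta> \<in> A} \<beta> \<partial>P)"
      by (intro nn_integral_cong) (auto simp: indicator_def)
    also have "\<dots> = emeasure P {\<beta> \<in> space P. comb_seq n \<alpha> \<beta> \<in> A}"
    proof (rule nn_integral_indicator)
      have "(\<lambda>\<beta>. comb_seq n \<alpha> \<beta>) \<in> P \<rightarrow>\<^sub>M P"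
        using measurable_Pair2[OF comb_meas a] by simp
      then show "{\<beta> \<in> space P. comb_seq n \<alpha> \<beta> \<in> A} \<in> sets P" by measurable
    qed
    finally show "(\<integral>\<^sup>+\<beta>. indicator A (comb_seq n \<alpha> \<beta>) \<partial>P) = emeasure P {\<beta> \<in> space P. comb_seq n \<alpha> \<beta> \<in> A}" .
  qed
  finally show ?thesis .
qed

lemma comb_space: "\<alpha> \<in> space P \<Longrightarrow> \<beta> \<in> space P \<Longrightarrow> comb_seq n \<alpha> \<beta> \<in> space P"
  by (auto simp: space_PiM comb_seq_def PiE_iff)

lemma umc_comb_lo: "I \<subseteq> {..<n} \<Longrightarrow> unif_mixture_cdf (comb_seq n \<alpha> \<beta>) I = unif_mixture_cdf \<alpha> I"
  unfolding unif_mixture_cdf_def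
  by (rule ext, rule arg_cong[where f="\<lambda>x. x / _"], rule sum.cong) (auto simp: comb_seq_def)

lemma umc_comb_hi: "unif_mixture_cdf (comb_seq n \<alpha> \<beta>) {n..<n+T} = unif_mixture_cdf \<beta> {0..<T}"
proof (rule ext)
  fix t
  have "(\<Sum>i\<in>{n..<n+T}. cdf_at (comb_seq n \<alpha> \<beta> i) t) = (\<Sum>i\<in>{0+n..<T+n}. cdf_at (comb_seq n \<alpha> \<beta> i) t)"
    by (simp add: add.commute)
  also have "\<dots> = (\<Sum>i\<in>{0..<T}. cdf_at (comb_seq n \<alpha> \<beta> (i + n)) t)"
    by (rule sum.shift_bounds_nat_ivl)
  also have "\<dots> = (\<Sum>i\<in>{0..<T}. cdf_at (\<beta> i) t)"
    by (simp add: comb_seq_def)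
  finally show "unif_mixture_cdf (comb_seq n \<alpha> \<beta>) {n..<n+T} t = unif_mixture_cdf \<beta> {0..<T} t"
    by (simp add: unif_mixture_cdf_def)
qed

lemma Qh_comb_lo: "I \<subseteq> {..<n} \<Longrightarrow> Qh (comb_seq n \<alpha> \<beta>) I = Qh \<alpha> I"
  by (simp add: Qh_def umc_comb_lo)

lemma Qh_comb_hi: "Qh (comb_seq n \<alpha> \<beta>) {n..<n+T} = Qh \<beta> {0..<T}"
  by (simp add: Qh_def umc_comb_hi)

end

locale estsetup = mixsetup +
  fixes a1 a2 \<epsilon> :: real
  assumes a1: "1 \<le> a1" and a2: "1 \<le> a2" and eps0: "0 < \<epsilon>" and eps1: "\<epsilon> \<le> 1"
begin

abbreviation "T1 \<equiv> est_T1 a1 \<epsilon>"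
abbreviation "Nt \<equiv> est_Ntilde a1 q \<epsilon>"
abbreviation "st \<equiv> est_sigma_sq a1 q \<epsilon>"
abbreviation "T2 \<equiv> est_T2 a1 a2 q \<epsilon>"

lemma T1_ge: "a1 / \<epsilon> \<le> T1"
  unfolding est_T1_def by linarith

lemma T1_le: "T1 \<le> a1 / \<epsilon> + 1"
proof -
  have "0 \<le> a1 / \<epsilon>" using a1 eps0 by simp
  then show ?thesis unfolding est_T1_def by linarith
qed

lemma T1_pos: "0 < T1"
proof -
  have "1 \<le> a1 / \<epsilon>" using a1 eps0 eps1 by (simp add: field_simps)
  then show ?thesis using T1_ge by linarith
qed

lemma Nt_eq: "Nt \<omega> = Qh \<omega> {0..<T1}"
  by (simp add: est_Ntilde_def Qh_def)

lemma out_eq: "est_output a1 a2 q \<epsilon> \<omega> = Qh \<omega> {2 * T1..<2 * T1 + T2 \<omega>}"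
  by (simp add: est_output_def Qh_def)

lemma Nt_meas[measurable]: "Nt \<in> borel_measurable P"
  unfolding Nt_eq by simp

lemma cdf_Nt_meas[measurable]: "(\<lambda>\<omega>. cdf_at (\<omega> i) (Nt \<omega>)) \<in> borel_measurable P"
  unfolding cdf_at_def
proof (rule measure_measurable_prob_algebra2[where N=borel])
  have "Sigma (space P) (\<lambda>\<omega>. {y. ereal y \<le> Nt \<omega>}) = {x \<in> space (P \<Otimes>\<^sub>M borel). ereal (snd x) \<le> Nt (fst x)}"
    by (auto simp: space_pair_measure)
  also have "\<dots> \<in> sets (P \<Otimes>\<^sub>M borel)" by measurable
  finally show "Sigma (space P) (\<lambda>\<omega>. {y. ereal y \<le> Nt \<omega>}) \<in> sets (P \<Otimes>\<^sub>M borel)" .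
  show "(\<lambda>\<omega>. \<omega> i) \<in> P \<rightarrow>\<^sub>M prob_algebra borel"
    using comp_meas[of i] measurable_cong_sets[OF refl D_sets, of P] by simp
qed

lemma st_meas[measurable]: "st \<in> borel_measurable P"
  unfolding est_sigma_sq_def by measurable

lemma nat_ceiling_eq_iff: "nat \<lceil>x::real\<rceil> = n \<longleftrightarrow> (n = 0 \<and> x \<le> 0) \<or> (0 < n \<and> real n - 1 < x \<and> x \<le> real n)"
  using ceiling_correct[of x] by (cases n) (auto, linarith+)

lemma T2_meas[measurable]: "T2 \<in> P \<rightarrow>\<^sub>M count_space UNIV"
proof (subst measurable_count_space_eq2_countable, safe)
  fix n :: nat
  define r where "r \<omega> = a2 * (1 / \<epsilon> + st \<omega> / \<epsilon>\<^sup>2)" for \<omega>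
  have [measurable]: "r \<in> borel_measurable P" unfolding r_def by measurable
  have "T2 -` {n} \<inter> space P = {\<omega> \<in> space P. nat \<lceil>r \<omega>\<rceil> = n}"
    by (auto simp: est_T2_def r_def)
  also have "\<dots> = {\<omega> \<in> space P. (n = 0 \<and> r \<omega> \<le> 0) \<or> (0 < n \<and> real n - 1 < r \<omega> \<and> r \<omega> \<le> real n)}"
    by (simp only: nat_ceiling_eq_iff)
  also have "\<dots> \<in> sets P" by measurable
  finally show "T2 -` {n} \<inter> space P \<in> sets P" .
qed simp

lemma out_meas[measurable]: "(\<lambda>\<omega>. est_output a1 a2 q \<epsilon> \<omega>) \<in> borel_measurable P"
  unfolding out_eq
  by (rule measurable_compose_countable[where f="\<lambda>T \<omega>. Qh \<omega> {2 * T1..<2 * T1 + T}" and g=T2]) simp_all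

lemma Gout_meas[measurable]: "(\<lambda>\<omega>. G (est_output a1 a2 q \<epsilon> \<omega>)) \<in> borel_measurable P"
  by (rule measurable_compose[OF out_meas mono_ereal_borel[OF G_mono]])

lemma samples_meas[measurable]: "(\<lambda>\<omega>. real (est_samples a1 a2 q \<epsilon> \<omega>)) \<in> borel_measurable P"
  unfolding est_samples_def by measurable

end


lemma sq_tri: fixes a b c :: real assumes "\<bar>a - b\<bar> \<le> 1"
  shows "(a - c)\<^sup>2 \<le> 2 * (b - c)\<^sup>2 + 2 * \<bar>a - b\<bar>"
proof -
  have "(a - b)\<^sup>2 \<le> \<bar>a - b\<bar>"
  proof -
    have "\<bar>a - b\<bar> * \<bar>a - b\<bar> \<le> 1 * \<bar>a - b\<bar>" using assms by (intro mult_right_mono) auto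
    then show ?thesis by (simp add: power2_eq_square abs_mult_self_eq)
  qed
  moreover have "(a - c)\<^sup>2 \<le> 2 * (b - c)\<^sup>2 + 2 * (a - b)\<^sup>2"
  proof -
    have "2 * (b - c)\<^sup>2 + 2 * (a - b)\<^sup>2 - (a - c)\<^sup>2 = ((b - c) - (a - b))\<^sup>2"
      by (simp add: power2_eq_square algebra_simps)
    moreover have "0 \<le> ((b - c) - (a - b))\<^sup>2" by simp
    ultimately show ?thesis by linarith
  qed
  ultimately show ?thesis by simp
qed

context mixsetup
begin

definition "h t = (\<integral>X. (cdf_at X t - q)\<^sup>2 \<partial>D)"

lemma int_sq[simp]: "integrable D (\<lambda>X. (cdf_at X t - q)\<^sup>2)"
  by (rule integrable_bdd[where B=1]) (simp, erule sq_dev_bound)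

lemma h_nonneg: "0 \<le> h t"
  unfolding h_def by simp

lemma int_absdiff: "(\<integral>X. \<bar>cdf_at X N - cdf_at X t\<bar> \<partial>D) = \<bar>G t - q\<bar>"
proof (cases "t \<le> N")
  case True
  have "(\<integral>X. \<bar>cdf_at X N - cdf_at X t\<bar> \<partial>D) = (\<integral>X. cdf_at X N - cdf_at X t \<partial>D)"
  proof (rule Bochner_Integration.integral_cong[OF refl])
    fix X assume "X \<in> space D"
    then interpret rdist X by (rule rdist_D)
    show "\<bar>cdf_at X N - cdf_at X t\<bar> = cdf_at X N - cdf_at X t" using cdf_mono[OF True] by simp
  qed
  also have "\<dots> = q - G t" by (simp add: G_def[symmetric] G_N)
  also have "\<dots> = \<bar>G t - q\<bar>" using G_mono'[OF True] G_N by simp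
  finally show ?thesis .
next
  case False
  then have F: "N \<le> t" by simp
  have "(\<integral>X. \<bar>cdf_at X N - cdf_at X t\<bar> \<partial>D) = (\<integral>X. cdf_at X t - cdf_at X N \<partial>D)"
  proof (rule Bochner_Integration.integral_cong[OF refl])
    fix X assume "X \<in> space D"
    then interpret rdist X by (rule rdist_D)
    show "\<bar>cdf_at X N - cdf_at X t\<bar> = cdf_at X t - cdf_at X N" using cdf_mono[OF F] by simp
  qed
  also have "\<dots> = G t - q" by (simp add: G_def[symmetric] G_N)
  also have "\<dots> = \<bar>G t - q\<bar>" using G_mono'[OF F] G_N by simp
  finally show ?thesis .
qed

lemma int_absdiff_int[simp]: "integrable D (\<lambda>X. \<bar>cdf_at X N - cdf_at X t\<bar>)"
proof (rule integrable_bdd[where B=1])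
  fix X assume "X \<in> space D"
  then show "\<bar>\<bar>cdf_at X N - cdf_at X t\<bar>\<bar> \<le> 1" using cdf_bounds[of X N] cdf_bounds[of X t] by auto
qed simp

lemma h_lower: "sigma_sq D q \<le> 2 * h t + 2 * \<bar>G t - q\<bar>"
proof -
  have "sigma_sq D q \<le> (\<integral>X. 2 * (cdf_at X t - q)\<^sup>2 + 2 * \<bar>cdf_at X N - cdf_at X t\<bar> \<partial>D)"
    unfolding sigma_eq
  proof (rule integral_mono)
    fix X assume "X \<in> space D"
    then have "\<bar>cdf_at X N - cdf_at X t\<bar> \<le> 1" using cdf_bounds[of X N] cdf_bounds[of X t] by auto
    then show "(cdf_at X N - q)\<^sup>2 \<le> 2 * (cdf_at X t - q)\<^sup>2 + 2 * \<bar>cdf_at X N - cdf_at X t\<bar>"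
      by (rule sq_tri)
  qed simp_all
  also have "\<dots> = 2 * h t + 2 * \<bar>G t - q\<bar>"
    by (simp add: h_def int_absdiff[symmetric])
  finally show ?thesis .
qed

lemma h_upper: "h t \<le> 2 * sigma_sq D q + 2 * \<bar>G t - q\<bar>"
proof -
  have "h t \<le> (\<integral>X. 2 * (cdf_at X N - q)\<^sup>2 + 2 * \<bar>cdf_at X N - cdf_at X t\<bar> \<partial>D)"
    unfolding h_def
  proof (rule integral_mono)
    fix X assume "X \<in> space D"
    then have "\<bar>cdf_at X t - cdf_at X N\<bar> \<le> 1" using cdf_bounds[of X N] cdf_bounds[of X t] by auto
    then have "(cdf_at X t - q)\<^sup>2 \<le> 2 * (cdf_at X N - q)\<^sup>2 + 2 * \<bar>cdf_at X t - cdf_at X N\<bar>"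
      by (rule sq_tri)
    then show "(cdf_at X t - q)\<^sup>2 \<le> 2 * (cdf_at X N - q)\<^sup>2 + 2 * \<bar>cdf_at X N - cdf_at X t\<bar>"
      by (simp add: abs_minus_commute)
  qed simp_all
  also have "\<dots> = 2 * sigma_sq D q + 2 * \<bar>G t - q\<bar>"
    by (simp add: sigma_eq int_absdiff[symmetric])
  finally show ?thesis .
qed

end


lemma arith_fg:
  fixes T a2 s e :: real
  assumes e: "0 < e" and a2: "1 \<le> a2" and s: "0 \<le> s" and T1: "a2 / e \<le> T" and T2: "a2 * s / (8 * e\<^sup>2) \<le> T"
  shows "(8 * s * T + 1152) / (T\<^sup>2 * e\<^sup>2) \<le> 64 / a2 + 1152 / a2\<^sup>2"
proof -
  have Te: "a2 \<le> T * e" using T1 e by (simp add: field_simps)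
  have Tp: "0 < T" using Te a2 e by (smt (verit) mult_nonpos_nonneg)
  have "(8 * s * T + 1152) / (T\<^sup>2 * e\<^sup>2) = 8 * s / (T * e\<^sup>2) + 1152 / (T * e)\<^sup>2"
    using Tp e by (simp add: field_simps power2_eq_square)
  also have "8 * s / (T * e\<^sup>2) \<le> 64 / a2"
  proof -
    have "a2 * s \<le> 8 * e\<^sup>2 * T" using T2 e by (simp add: field_simps)
    then show ?thesis using Tp e a2 by (simp add: field_simps)
  qed
  also have "1152 / (T * e)\<^sup>2 \<le> 1152 / a2\<^sup>2"
    using Te a2 by (intro divide_left_mono power_mono mult_pos_pos) auto
  finally show ?thesis by simp
qed

lemma arith_bad1:
  fixes T a1 s :: real
  assumes a1: "1 \<le> a1" and y: "a1 \<le> T * s" and s: "0 < s"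
  shows "(8 * s * T + 1152) / (T\<^sup>2 * (s / 4)\<^sup>2) \<le> 128 / a1 + 18432 / a1\<^sup>2"
proof -
  have Tp: "0 < T" using y a1 s by (smt (verit) mult_nonpos_nonneg)
  have "(8 * s * T + 1152) / (T\<^sup>2 * (s / 4)\<^sup>2) = 128 / (T * s) + 18432 / (T * s)\<^sup>2"
    using Tp s by (simp add: field_simps power2_eq_square)
  also have "128 / (T * s) \<le> 128 / a1" using y a1 by (intro divide_left_mono) auto
  also have "18432 / (T * s)\<^sup>2 \<le> 18432 / a1\<^sup>2"
    using y a1 by (intro divide_left_mono power_mono mult_pos_pos) auto
  finally show ?thesis by simp
qed

context estsetup
begin

lemma realT2_meas[measurable]: "(\<lambda>\<omega>. real (T2 \<omega>)) \<in> borel_measurable P"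
  by (rule measurable_compose[OF T2_meas]) simp

lemma Nt_comb: "T1 \<le> k \<Longrightarrow> Nt (comb_seq k \<alpha> \<beta>) = Nt \<alpha>"
  unfolding Nt_eq by (rule Qh_comb_lo) auto

lemma st_comb2: "st (comb_seq (2 * T1) \<alpha> \<beta>) = st \<alpha>"
  unfolding est_sigma_sq_def Nt_comb[of "2 * T1", simplified]
  by (rule arg_cong[where f="\<lambda>x. x / _"], rule sum.cong) (auto simp: comb_seq_def)

lemma T2_comb2: "T2 (comb_seq (2 * T1) \<alpha> \<beta>) = T2 \<alpha>"
  unfolding est_T2_def st_comb2 ..

lemma out_comb2: "est_output a1 a2 q \<epsilon> (comb_seq (2 * T1) \<alpha> \<beta>) = Qh \<beta> {0..<T2 \<alpha>}"
  unfolding out_eq T2_comb2 by (rule Qh_comb_hi)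

lemma st_comb1: "st (comb_seq T1 \<alpha> \<beta>) = (\<Sum>j\<in>{0..<T1}. (cdf_at (\<beta> j) (Nt \<alpha>) - q)\<^sup>2) / T1"
proof -
  have "(\<Sum>i\<in>{T1..<2 * T1}. (cdf_at (comb_seq T1 \<alpha> \<beta> i) (Nt \<alpha>) - q)\<^sup>2)
      = (\<Sum>i\<in>{0 + T1..<T1 + T1}. (cdf_at (comb_seq T1 \<alpha> \<beta> i) (Nt \<alpha>) - q)\<^sup>2)"
    by (simp add: mult_2)
  also have "\<dots> = (\<Sum>j\<in>{0..<T1}. (cdf_at (comb_seq T1 \<alpha> \<beta> (j + T1)) (Nt \<alpha>) - q)\<^sup>2)"
    by (rule sum.shift_bounds_nat_ivl)
  also have "\<dots> = (\<Sum>j\<in>{0..<T1}. (cdf_at (\<beta> j) (Nt \<alpha>) - q)\<^sup>2)"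
    by (simp add: comb_seq_def)
  finally show ?thesis
    unfolding est_sigma_sq_def Nt_comb[of T1, simplified] by simp
qed

lemma st_nonneg: "0 \<le> st \<omega>"
  unfolding est_sigma_sq_def by (intro divide_nonneg_nonneg sum_nonneg) auto

lemma T2_ge: "a2 * (1 / \<epsilon> + st \<omega> / \<epsilon>\<^sup>2) \<le> T2 \<omega>"
  unfolding est_T2_def by linarith

lemma T2_ge1: "a2 / \<epsilon> \<le> T2 \<omega>"
proof -
  have "a2 / \<epsilon> \<le> a2 * (1 / \<epsilon> + st \<omega> / \<epsilon>\<^sup>2)"
    using a2 st_nonneg[of \<omega>] eps0 by (simp add: field_simps)
  then show ?thesis using T2_ge[of \<omega>] by linarith
qed

lemma T2_pos: "0 < T2 \<omega>"
proof -
  have "0 < a2 / \<epsilon>" using a2 eps0 by simp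
  then show ?thesis using T2_ge1[of \<omega>] by simp
qed

lemma measure_le_em: "emeasure P A \<le> ennreal B \<Longrightarrow> 0 \<le> B \<Longrightarrow> measure P A \<le> B"
  using finite_measure.emeasure_eq_measure[OF PP_fm, of A] by simp

definition "Fail = {\<omega> \<in> space P. \<epsilon> < \<bar>G (est_output a1 a2 q \<epsilon> \<omega>) - q\<bar>}"
definition "Gd = {\<omega> \<in> space P. a2 / \<epsilon> \<le> real (T2 \<omega>) \<and> a2 * \<sigma>2 / (8 * \<epsilon>\<^sup>2) \<le> real (T2 \<omega>)}"

lemma Fail_meas[measurable]: "Fail \<in> sets P" unfolding Fail_def by measurable
lemma Gd_meas[measurable]: "Gd \<in> sets P" unfolding Gd_def by measurable

lemma fail_good: "measure P (Fail \<inter> Gd) \<le> 64 / a2 + 1152 / a2\<^sup>2"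
proof (rule measure_le_em)
  define B where "B = 64 / a2 + 1152 / a2\<^sup>2"
  have B0: "0 \<le> B" using a2 by (simp add: B_def)
  have "emeasure P (Fail \<inter> Gd) = (\<integral>\<^sup>+\<alpha>. emeasure P {\<beta> \<in> space P. comb_seq (2 * T1) \<alpha> \<beta> \<in> Fail \<inter> Gd} \<partial>P)"
    by (rule split_emeasure) simp
  also have "\<dots> \<le> (\<integral>\<^sup>+\<alpha>. ennreal B \<partial>P)"
  proof (rule nn_integral_mono)
    fix \<alpha> assume a: "\<alpha> \<in> space P"
    show "emeasure P {\<beta> \<in> space P. comb_seq (2 * T1) \<alpha> \<beta> \<in> Fail \<inter> Gd} \<le> ennreal B"
    proof (cases "\<alpha> \<in> Gd")
      case False
      have e: "{\<beta> \<in> space P. comb_seq (2 * T1) \<alpha> \<beta> \<in> Fail \<inter> Gd} = {}"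
        using False a by (auto simp: Gd_def T2_comb2)
      show ?thesis unfolding e by simp
    next
      case True
      define T where "T = T2 \<alpha>"
      have I: "finite {0..<T}" "{0..<T} \<noteq> {}" using T2_pos[of \<alpha>] by (auto simp: T_def)
      have sub: "{\<beta> \<in> space P. comb_seq (2 * T1) \<alpha> \<beta> \<in> Fail \<inter> Gd} \<subseteq> {\<beta> \<in> space P. \<epsilon> < \<bar>G (Qh \<beta> {0..<T}) - q\<bar>}"
        by (auto simp: Fail_def out_comb2 T_def)
      have tl: "measure P {\<beta> \<in> space P. \<epsilon> < \<bar>G (Qh \<beta> {0..<T}) - q\<bar>} \<le> (8 * \<sigma>2 * real T + 1152) / ((real T)\<^sup>2 * \<epsilon>\<^sup>2)"
        using tail[OF I eps0] by simp
      have "emeasure P {\<beta> \<in> space P. comb_seq (2 * T1) \<alpha> \<beta> \<in> Fail \<inter> Gd} \<le> emeasure P {\<beta> \<in> space P. \<epsilon> < \<bar>G (Qh \<beta> {0..<T}) - q\<bar>}"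
        by (rule emeasure_mono[OF sub]) simp
      also have "\<dots> = ennreal (measure P {\<beta> \<in> space P. \<epsilon> < \<bar>G (Qh \<beta> {0..<T}) - q\<bar>})"
        by (rule finite_measure.emeasure_eq_measure[OF PP_fm])
      also have "\<dots> \<le> ennreal ((8 * \<sigma>2 * real T + 1152) / ((real T)\<^sup>2 * \<epsilon>\<^sup>2))"
        by (rule ennreal_leI[OF tl])
      also have "(8 * \<sigma>2 * real T + 1152) / ((real T)\<^sup>2 * \<epsilon>\<^sup>2) \<le> B"
        unfolding B_def using True a
        by (intro arith_fg eps0 a2 sigma_nonneg) (auto simp: Gd_def T_def)
      finally show ?thesis by (simp add: ennreal_leI)
    qed
  qed
  also have "\<dots> = ennreal B" by (simp add: PS.emeasure_space_1)
  finally show "emeasure P (Fail \<inter> Gd) \<le> ennreal (64 / a2 + 1152 / a2\<^sup>2)" by (simp add: B_def)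
  show "0 \<le> 64 / a2 + 1152 / a2\<^sup>2" using a2 by simp
qed

lemma good_all: "\<sigma>2 \<le> \<epsilon> \<Longrightarrow> Gd = space P"
proof -
  assume s: "\<sigma>2 \<le> \<epsilon>"
  have "a2 * \<sigma>2 / (8 * \<epsilon>\<^sup>2) \<le> a2 / \<epsilon>"
  proof -
    have "a2 * \<sigma>2 \<le> a2 * \<epsilon>" using s a2 by (intro mult_left_mono) auto
    also have "\<dots> \<le> a2 * \<epsilon> * 8" using a2 eps0 by simp
    finally show ?thesis using eps0 by (simp add: field_simps power2_eq_square)
  qed
  then show ?thesis using T2_ge1 unfolding Gd_def by (auto intro: order_trans)
qed

lemma bad_sub: "space P - Gd \<subseteq> {\<omega> \<in> space P. st \<omega> < \<sigma>2 / 8}"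
proof safe
  fix \<omega> assume w: "\<omega> \<in> space P" and ng: "\<omega> \<notin> Gd"
  show "st \<omega> < \<sigma>2 / 8"
  proof (rule ccontr)
    assume "\<not> st \<omega> < \<sigma>2 / 8"
    then have "\<sigma>2 / 8 \<le> st \<omega>" by simp
    have "a2 * \<sigma>2 / (8 * \<epsilon>\<^sup>2) = a2 * ((\<sigma>2 / 8) / \<epsilon>\<^sup>2)" by simp
    also have "\<dots> \<le> a2 * (st \<omega> / \<epsilon>\<^sup>2)"
      using \<open>\<sigma>2 / 8 \<le> st \<omega>\<close> a2 by (intro mult_left_mono divide_right_mono) auto
    also have "\<dots> \<le> a2 * (1 / \<epsilon> + st \<omega> / \<epsilon>\<^sup>2)"
      using a2 eps0 by (intro mult_left_mono) auto
    finally have "a2 * \<sigma>2 / (8 * \<epsilon>\<^sup>2) \<le> a2 * (1 / \<epsilon> + st \<omega> / \<epsilon>\<^sup>2)" .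
    then have "a2 * \<sigma>2 / (8 * \<epsilon>\<^sup>2) \<le> T2 \<omega>" using T2_ge[of \<omega>] by linarith
    with T2_ge1[of \<omega>] w ng show False by (auto simp: Gd_def)
  qed
qed

lemma h_Good1: assumes A: "\<bar>G t - q\<bar> \<le> \<sigma>2 / 4" shows "\<sigma>2 / 4 \<le> h t"
proof -
  have B: "\<sigma>2 \<le> 2 * h t + 2 * \<bar>G t - q\<bar>" by (rule h_lower)
  have C: "2 * \<bar>G t - q\<bar> \<le> \<sigma>2 / 2" using A by simp
  from B C have "\<sigma>2 \<le> 2 * h t + \<sigma>2 / 2" by (rule order.trans[OF _ add_left_mono])
  then show ?thesis by simp
qed

lemma bad_bound:
  assumes s: "\<epsilon> < \<sigma>2"
  shows "measure P (space P - Gd) \<le> 128 / a1 + 18432 / a1\<^sup>2 + exp (- (a1 / 48))"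
proof -
  define Bad1 where "Bad1 = {\<omega> \<in> space P. \<sigma>2 / 4 < \<bar>G (Nt \<omega>) - q\<bar>}"
  define S8 where "S8 = {\<omega> \<in> space P. st \<omega> < \<sigma>2 / 8}"
  define Good1 where "Good1 = {\<omega> \<in> space P. \<bar>G (Nt \<omega>) - q\<bar> \<le> \<sigma>2 / 4}"
  have [measurable]: "Bad1 \<in> sets P" "S8 \<in> sets P" "Good1 \<in> sets P"
    unfolding Bad1_def S8_def Good1_def
    by (measurable, rule measurable_compose[OF Nt_meas mono_ereal_borel[OF G_mono]])+
  have s0: "0 < \<sigma>2" using s eps0 by simp
  have T1s: "a1 \<le> T1 * \<sigma>2"
  proof -
    have "a1 = (a1 / \<epsilon>) * \<epsilon>" using eps0 by simp
    also have "\<dots> \<le> T1 * \<sigma>2" using T1_ge s a1 eps0 by (intro mult_mono) auto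
    finally show ?thesis .
  qed
  have "measure P Bad1 \<le> (8 * \<sigma>2 * real T1 + 1152) / ((real T1)\<^sup>2 * (\<sigma>2 / 4)\<^sup>2)"
    using tail[of "{0..<T1}" "\<sigma>2 / 4"] T1_pos s0 unfolding Bad1_def Nt_eq by simp
  also have "\<dots> \<le> 128 / a1 + 18432 / a1\<^sup>2"
    by (rule arith_bad1[OF a1 T1s s0])
  finally have b1: "measure P Bad1 \<le> 128 / a1 + 18432 / a1\<^sup>2" .
  have "measure P (Good1 \<inter> S8) \<le> exp (- (a1 / 48))"
  proof (rule measure_le_em)
    have "emeasure P (Good1 \<inter> S8) = (\<integral>\<^sup>+\<alpha>. emeasure P {\<beta> \<in> space P. comb_seq T1 \<alpha> \<beta> \<in> Good1 \<inter> S8} \<partial>P)"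
      by (rule split_emeasure) simp
    also have "\<dots> \<le> (\<integral>\<^sup>+\<alpha>. ennreal (exp (- (a1 / 48))) \<partial>P)"
    proof (rule nn_integral_mono)
      fix \<alpha> assume a: "\<alpha> \<in> space P"
      show "emeasure P {\<beta> \<in> space P. comb_seq T1 \<alpha> \<beta> \<in> Good1 \<inter> S8} \<le> ennreal (exp (- (a1 / 48)))"
      proof (cases "\<alpha> \<in> Good1")
        case False
        have e: "{\<beta> \<in> space P. comb_seq T1 \<alpha> \<beta> \<in> Good1 \<inter> S8} = {}"
          using False a by (auto simp: Good1_def Nt_comb)
        show ?thesis unfolding e by simp
      next
        case True
        define t where "t = Nt \<alpha>"
        define f where "f X = (cdf_at X t - q)\<^sup>2" for X
        have fm[measurable]: "f \<in> borel_measurable D" unfolding f_def by simp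
        have fb: "0 \<le> f X \<and> f X \<le> 1" if "X \<in> space D" for X
          using sq_dev_bound[OF that, of t] by (simp add: f_def)
        have hf: "integral\<^sup>L D f = h t" by (simp add: f_def[abs_def] h_def)
        have ht: "\<sigma>2 / 4 \<le> h t" using True by (intro h_Good1) (simp add: Good1_def t_def)
        have sub: "{\<beta> \<in> space P. comb_seq T1 \<alpha> \<beta> \<in> Good1 \<inter> S8} \<subseteq>
            {\<beta> \<in> space P. (\<Sum>i\<in>{0..<T1}. f (\<beta> i)) \<le> card {0..<T1} * integral\<^sup>L D f / 2}"
        proof safe
          fix \<beta> assume b: "\<beta> \<in> space P" and c: "comb_seq T1 \<alpha> \<beta> \<in> S8"
          have "(\<Sum>i\<in>{0..<T1}. f (\<beta> i)) / T1 < \<sigma>2 / 8"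
            using c by (simp add: S8_def st_comb1 f_def t_def)
          then have "(\<Sum>i\<in>{0..<T1}. f (\<beta> i)) < T1 * \<sigma>2 / 8"
            using T1_pos by (simp add: field_simps)
          also have "\<dots> \<le> T1 * h t / 2" using ht T1_pos by (simp add: field_simps)
          finally show "(\<Sum>i\<in>{0..<T1}. f (\<beta> i)) \<le> card {0..<T1} * integral\<^sup>L D f / 2"
            by (simp add: hf)
        qed
        have "emeasure P {\<beta> \<in> space P. comb_seq T1 \<alpha> \<beta> \<in> Good1 \<inter> S8}
            \<le> emeasure P {\<beta> \<in> space P. (\<Sum>i\<in>{0..<T1}. f (\<beta> i)) \<le> card {0..<T1} * integral\<^sup>L D f / 2}"
          by (rule emeasure_mono[OF sub]) measurable
        also have "\<dots> = ennreal (measure P {\<beta> \<in> space P. (\<Sum>i\<in>{0..<T1}. f (\<beta> i)) \<le> card {0..<T1} * integral\<^sup>L D f / 2})"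
          by (rule finite_measure.emeasure_eq_measure[OF PP_fm])
        also have "\<dots> \<le> ennreal (exp (- (card {0..<T1} * integral\<^sup>L D f / 12)))"
          by (intro ennreal_leI chernoff_sum fm fb) auto
        also have "exp (- (card {0..<T1} * integral\<^sup>L D f / 12)) \<le> exp (- (a1 / 48))"
        proof -
          have "a1 / 4 \<le> T1 * (\<sigma>2 / 4)" using T1s by simp
          also have "\<dots> \<le> T1 * h t" using ht by (intro mult_left_mono) auto
          finally show ?thesis by (simp add: hf)
        qed
        finally show ?thesis by (simp add: ennreal_leI)
      qed
    qed
    also have "\<dots> = ennreal (exp (- (a1 / 48)))" by (simp add: PS.emeasure_space_1)
    finally show "emeasure P (Good1 \<inter> S8) \<le> ennreal (exp (- (a1 / 48)))" .
  qed simp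
  have "space P - Gd \<subseteq> Bad1 \<union> (Good1 \<inter> S8)"
    using bad_sub by (auto simp: Bad1_def Good1_def S8_def)
  then have "measure P (space P - Gd) \<le> measure P (Bad1 \<union> (Good1 \<inter> S8))"
    by (intro finite_measure.finite_measure_mono[OF PP_fm]) measurable
  also have "\<dots> \<le> measure P Bad1 + measure P (Good1 \<inter> S8)"
    by (rule measure_Un_le) measurable
  also have "\<dots> \<le> 128 / a1 + 18432 / a1\<^sup>2 + exp (- (a1 / 48))"
    using b1 \<open>measure P (Good1 \<inter> S8) \<le> exp (- (a1 / 48))\<close> by linarith
  finally show ?thesis .
qed

lemma fail_bound: "measure P Fail \<le> 64 / a2 + 1152 / a2\<^sup>2 + 128 / a1 + 18432 / a1\<^sup>2 + exp (- (a1 / 48))"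
proof -
  have nb: "measure P (space P - Gd) \<le> 128 / a1 + 18432 / a1\<^sup>2 + exp (- (a1 / 48))"
  proof (cases "\<sigma>2 \<le> \<epsilon>")
    case True
    then show ?thesis using good_all a1 by (simp add: add_nonneg_nonneg)
  next
    case False
    then show ?thesis by (intro bad_bound) simp
  qed
  have "Fail \<subseteq> (Fail \<inter> Gd) \<union> (space P - Gd)" using Fail_def by auto
  then have "measure P Fail \<le> measure P ((Fail \<inter> Gd) \<union> (space P - Gd))"
    by (intro finite_measure.finite_measure_mono[OF PP_fm]) measurable
  also have "\<dots> \<le> measure P (Fail \<inter> Gd) + measure P (space P - Gd)"
    by (rule measure_Un_le) measurable
  finally show ?thesis using fail_good nb by linarith
qed

end


lemma dyadic_point:
  fixes z m :: real and K :: nat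
  assumes m: "0 < m" and z0: "0 \<le> z" and z1: "z \<le> 2 ^ K * m"
  shows "z \<le> m + 2 * (\<Sum>k<K. 2 ^ k * m * indicator {x. 2 ^ k * m < x} z)"
proof (cases "z \<le> m")
  case True
  have "0 \<le> (\<Sum>k<K. 2 ^ k * m * indicator {x. 2 ^ k * m < x} z)"
    using m by (intro sum_nonneg) auto
  with True show ?thesis by simp
next
  case False
  define n where "n = (LEAST k. z \<le> 2 ^ k * m)"
  have ex: "z \<le> 2 ^ n * m" unfolding n_def by (rule LeastI[of _ K]) (rule z1)
  have nK: "n \<le> K" unfolding n_def by (rule Least_le) (rule z1)
  have n0: "n \<noteq> 0"
  proof
    assume "n = 0" with ex False show False by simp
  qed
  define j where "j = n - 1"
  have jn: "n = Suc j" using n0 by (simp add: j_def)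
  have jK: "j < K" using nK jn by simp
  have lt: "2 ^ j * m < z"
  proof -
    have "j < n" using jn by simp
    then have "\<not> z \<le> 2 ^ j * m"
      using not_less_Least[of j "\<lambda>k. z \<le> 2 ^ k * m"] unfolding n_def by blast
    then show ?thesis by simp
  qed
  have "z \<le> 2 * (2 ^ j * m)" using ex jn by simp
  also have "2 ^ j * m = 2 ^ j * m * indicator {x. 2 ^ j * m < x} z" using lt by simp
  also have "\<dots> \<le> (\<Sum>k<K. 2 ^ k * m * indicator {x. 2 ^ k * m < x} z)"
    using jK m by (intro member_le_sum) auto
  finally show ?thesis using m by simp
qed

context mixsetup
begin

lemma dyadic_expect:
  fixes Z :: "(nat \<Rightarrow> real measure) \<Rightarrow> real"
  assumes Zm[measurable]: "Z \<in> borel_measurable P" and Zb: "\<And>\<omega>. \<omega> \<in> space P \<Longrightarrow> 0 \<le> Z \<omega> \<and> Z \<omega> \<le> 1"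
    and m: "0 < m" and A: "0 \<le> A"
    and tl: "\<And>\<delta>. 0 < \<delta> \<Longrightarrow> measure P {\<omega> \<in> space P. \<delta> < Z \<omega>} \<le> A / \<delta>\<^sup>2"
  shows "(\<integral>\<omega>. Z \<omega> \<partial>P) \<le> m + 4 * A / m"
proof -
  obtain K :: nat where K: "1 / m < 2 ^ K" using real_arch_pow[of 2 "1 / m"] by auto
  then have K1: "1 \<le> 2 ^ K * m" using m by (simp add: field_simps)
  define S where "S k = {\<omega> \<in> space P. 2 ^ k * m < Z \<omega>}" for k :: nat
  have Sm[measurable]: "S k \<in> sets P" for k unfolding S_def by measurable
  have intZ: "integrable P Z"
    by (rule finite_measure.integrable_const_bound[where B=1, OF PP_fm]) (auto intro!: AE_I2 dest: Zb)
  define g where "g k \<omega> = 2 ^ k * m * indicator (S k) \<omega>" for k \<omega>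
  have intS: "integrable P (g k)" for k
    unfolding g_def
    by (intro integrable_mult_right integrable_real_indicator) (simp_all add: finite_measure.emeasure_finite[OF PP_fm] less_top[symmetric])
  have ig: "(\<integral>\<omega>. g k \<omega> \<partial>P) = 2 ^ k * m * measure P (S k)" for k
  proof -
    have "S k \<inter> space P = S k" by (auto simp: S_def)
    then show ?thesis by (simp add: g_def)
  qed
  have "(\<integral>\<omega>. Z \<omega> \<partial>P) \<le> (\<integral>\<omega>. m + 2 * (\<Sum>k<K. g k \<omega>) \<partial>P)"
  proof (rule integral_mono)
    show "integrable P (\<lambda>\<omega>. m + 2 * (\<Sum>k<K. g k \<omega>))"
      using intS by (intro Bochner_Integration.integrable_add integrable_mult_right Bochner_Integration.integrable_sum) auto
    fix \<omega> assume w: "\<omega> \<in> space P"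
    have "Z \<omega> \<le> m + 2 * (\<Sum>k<K. 2 ^ k * m * indicator {x. 2 ^ k * m < x} (Z \<omega>))"
      using Zb[OF w] K1 m by (intro dyadic_point) auto
    also have "(\<Sum>k<K. 2 ^ k * m * indicator {x. 2 ^ k * m < x} (Z \<omega>)) = (\<Sum>k<K. g k \<omega>)"
      using w by (intro sum.cong) (auto simp: S_def g_def indicator_def)
    finally show "Z \<omega> \<le> m + 2 * (\<Sum>k<K. g k \<omega>)" .
  qed (rule intZ)
  also have "(\<integral>\<omega>. m + 2 * (\<Sum>k<K. g k \<omega>) \<partial>P) = (\<integral>\<omega>. m \<partial>P) + (\<integral>\<omega>. 2 * (\<Sum>k<K. g k \<omega>) \<partial>P)"
    by (rule Bochner_Integration.integral_add) (use intS in auto)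
  also have "(\<integral>\<omega>. 2 * (\<Sum>k<K. g k \<omega>) \<partial>P) = 2 * (\<integral>\<omega>. (\<Sum>k<K. g k \<omega>) \<partial>P)"
    by (rule integral_mult_right_zero)
  also have "(\<integral>\<omega>. (\<Sum>k<K. g k \<omega>) \<partial>P) = (\<Sum>k<K. (\<integral>\<omega>. g k \<omega> \<partial>P))"
    by (rule Bochner_Integration.integral_sum) (use intS in auto)
  also have "(\<integral>\<omega>. m \<partial>P) = m" by (simp add: prob_space.prob_space[OF P_prob])
  also have "(\<Sum>k<K. (\<integral>\<omega>. g k \<omega> \<partial>P)) = (\<Sum>k<K. 2 ^ k * m * measure P (S k))"
    by (simp add: ig)
  also have "(\<Sum>k<K. 2 ^ k * m * measure P (S k)) \<le> (\<Sum>k<K. 2 ^ k * m * (A / (2 ^ k * m)\<^sup>2))"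
  proof (rule sum_mono)
    fix k
    have "measure P (S k) \<le> A / (2 ^ k * m)\<^sup>2" unfolding S_def using m by (intro tl) simp
    then show "2 ^ k * m * measure P (S k) \<le> 2 ^ k * m * (A / (2 ^ k * m)\<^sup>2)"
      using m by (intro mult_left_mono) auto
  qed
  also have "(\<Sum>k<K. 2 ^ k * m * (A / (2 ^ k * m)\<^sup>2)) = (A / m) * (\<Sum>k<K. (1/2) ^ k)"
    using m by (simp add: sum_distrib_left power2_eq_square field_simps power_divide)
  also have "(\<Sum>k<K. (1/2::real) ^ k) \<le> 2"
    by (simp add: sum_gp_strict)
  then have "(A / m) * (\<Sum>k<K. (1/2::real) ^ k) \<le> (A / m) * 2"
    using A m by (intro mult_left_mono) auto
  finally show ?thesis by (simp add: field_simps)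
qed

end


lemma arith_poly: fixes e T s :: real
  assumes e: "0 < e" and Te: "1 \<le> T * e" and s: "0 \<le> s" and T: "0 < T"
  shows "32 * s * T + 4608 \<le> 4640 * e * (T\<^sup>2 * (e + s))"
proof -
  define u where "u = T * e"
  have u1: "1 \<le> u" using Te by (simp add: u_def)
  have eq: "4640 * e * (T\<^sup>2 * (e + s)) = 4640 * (u * u) + 4640 * (s * T * u)"
    by (simp add: u_def power2_eq_square algebra_simps)
  have a: "s * T * 1 \<le> s * T * u" using u1 s T by (intro mult_left_mono) auto
  have b: "1 * 1 \<le> u * u" using u1 by (intro mult_mono) auto
  have c: "0 \<le> s * T" using s T by simp
  show ?thesis unfolding eq using a b c by linarith
qed

lemma arith_EZ:
  fixes e T s :: real
  assumes e: "0 < e" and Te: "1 \<le> T * e" and s: "0 \<le> s"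
  shows "4 * ((8 * s * T + 1152) / T\<^sup>2) / (e + s) \<le> 4640 * e"
proof -
  have T: "0 < T" using Te e by (smt (verit) mult_nonpos_nonneg)
  have m: "0 < e + s" using e s by simp
  have D: "0 < T\<^sup>2 * (e + s)" using T m by simp
  have "4 * ((8 * s * T + 1152) / T\<^sup>2) / (e + s) = (32 * s * T + 4608) / (T\<^sup>2 * (e + s))"
    by (simp add: divide_divide_eq_left algebra_simps)
  also have "\<dots> \<le> 4640 * e"
    using D arith_poly[OF e Te s T] by (simp add: pos_divide_le_eq mult.commute mult.left_commute)
  finally show ?thesis .
qed

lemma real_nat_ceiling_le: "0 \<le> x \<Longrightarrow> real (nat \<lceil>x\<rceil>) \<le> x + 1"
  by linarith

context estsetup
begin

definition "Zt \<alpha> = \<bar>G (Nt \<alpha>) - q\<bar>"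

lemma Zt_meas[measurable]: "Zt \<in> borel_measurable P"
  unfolding Zt_def by (intro borel_measurable_abs borel_measurable_diff measurable_compose[OF Nt_meas mono_ereal_borel[OF G_mono]]) simp

lemma Zt_bounds: "0 \<le> Zt \<alpha> \<and> Zt \<alpha> \<le> 1"
  using G_nonneg[of "Nt \<alpha>"] G_le1[of "Nt \<alpha>"] q0 q1 by (auto simp: Zt_def)

lemma EZ: "(\<integral>\<alpha>. Zt \<alpha> \<partial>P) \<le> \<sigma>2 + 4641 * \<epsilon>"
proof -
  define A where "A = (8 * \<sigma>2 * real T1 + 1152) / (real T1)\<^sup>2"
  have A0: "0 \<le> A" unfolding A_def using sigma_nonneg by simp
  have m: "0 < \<epsilon> + \<sigma>2" using eps0 sigma_nonneg by simp
  have "(\<integral>\<alpha>. Zt \<alpha> \<partial>P) \<le> (\<epsilon> + \<sigma>2) + 4 * A / (\<epsilon> + \<sigma>2)"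
  proof (rule dyadic_expect[OF Zt_meas Zt_bounds m A0])
    fix \<delta> :: real assume d: "0 < \<delta>"
    have "measure P {\<omega> \<in> space P. \<delta> < Zt \<omega>} = measure P {\<omega> \<in> space P. \<delta> < \<bar>G (Qh \<omega> {0..<T1}) - q\<bar>}"
      by (simp add: Zt_def Nt_eq)
    also have "\<dots> \<le> (8 * \<sigma>2 * card {0..<T1} + 1152) / ((card {0..<T1})\<^sup>2 * \<delta>\<^sup>2)"
      using T1_pos d by (intro tail) auto
    also have "\<dots> = A / \<delta>\<^sup>2" by (simp add: A_def)
    finally show "measure P {\<omega> \<in> space P. \<delta> < Zt \<omega>} \<le> A / \<delta>\<^sup>2" .
  qed
  also have "4 * A / (\<epsilon> + \<sigma>2) \<le> 4640 * \<epsilon>"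
  proof -
    have "1 \<le> real T1 * \<epsilon>"
    proof -
      have "1 \<le> a1" by (rule a1)
      also have "a1 = (a1 / \<epsilon>) * \<epsilon>" using eps0 by simp
      also have "\<dots> \<le> real T1 * \<epsilon>" using T1_ge eps0 by (intro mult_right_mono) auto
      finally show ?thesis .
    qed
    then show ?thesis unfolding A_def using arith_EZ[OF eps0 _ sigma_nonneg] by simp
  qed
  finally show ?thesis by simp
qed

lemma inner_st:
  assumes a: "\<alpha> \<in> space P"
  shows "(\<integral>\<^sup>+\<beta>. ennreal (st (comb_seq T1 \<alpha> \<beta>)) \<partial>P) = ennreal (h (Nt \<alpha>))"
proof -
  define f where "f X = (cdf_at X (Nt \<alpha>) - q)\<^sup>2" for X
  have fm[measurable]: "f \<in> borel_measurable D" unfolding f_def by simp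
  have fi: "integrable D f" unfolding f_def by simp
  have fb: "0 \<le> f X \<and> f X \<le> 1" if "X \<in> space D" for X
    using sq_dev_bound[OF that, of "Nt \<alpha>"] by (simp add: f_def)
  have eq: "st (comb_seq T1 \<alpha> \<beta>) = (\<Sum>j\<in>{0..<T1}. f (\<beta> j)) / T1" for \<beta>
    by (simp add: st_comb1 f_def)
  have intS: "integrable P (\<lambda>\<beta>. (\<Sum>j\<in>{0..<T1}. f (\<beta> j)) / T1)"
  proof (rule finite_measure.integrable_const_bound[where B="real T1", OF PP_fm])
    show "AE \<beta> in P. norm ((\<Sum>j\<in>{0..<T1}. f (\<beta> j)) / T1) \<le> real T1"
    proof (rule AE_I2)
      fix \<beta> assume b: "\<beta> \<in> space P"
      have s0: "0 \<le> (\<Sum>j\<in>{0..<T1}. f (\<beta> j))" using fb space_P_D[OF b] by (intro sum_nonneg) auto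
      have "(\<Sum>j\<in>{0..<T1}. f (\<beta> j)) \<le> (\<Sum>j\<in>{0..<T1}. 1)" using fb space_P_D[OF b] by (intro sum_mono) auto
      then have le1: "(\<Sum>j\<in>{0..<T1}. f (\<beta> j)) / T1 \<le> 1" using T1_pos by (simp add: field_simps)
      have ge0: "0 \<le> (\<Sum>j\<in>{0..<T1}. f (\<beta> j)) / T1" using s0 by simp
      have "1 \<le> real T1" using T1_pos by simp
      moreover have "norm ((\<Sum>j\<in>{0..<T1}. f (\<beta> j)) / T1) = (\<Sum>j\<in>{0..<T1}. f (\<beta> j)) / T1"
        using ge0 by (simp only: real_norm_def abs_of_nonneg)
      ultimately show "norm ((\<Sum>j\<in>{0..<T1}. f (\<beta> j)) / T1) \<le> real T1" using le1 by linarith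
    qed
  qed simp
  have "(\<integral>\<^sup>+\<beta>. ennreal (st (comb_seq T1 \<alpha> \<beta>)) \<partial>P) = (\<integral>\<^sup>+\<beta>. ennreal ((\<Sum>j\<in>{0..<T1}. f (\<beta> j)) / T1) \<partial>P)"
    by (simp add: eq)
  also have "\<dots> = ennreal (\<integral>\<beta>. (\<Sum>j\<in>{0..<T1}. f (\<beta> j)) / T1 \<partial>P)"
    by (rule nn_integral_eq_integral[OF intS]) (auto intro!: AE_I2 sum_nonneg divide_nonneg_nonneg dest: space_P_D fb)
  also have "(\<integral>\<beta>. (\<Sum>j\<in>{0..<T1}. f (\<beta> j)) / T1 \<partial>P) = (\<Sum>j\<in>{0..<T1}. (\<integral>\<beta>. f (\<beta> j) \<partial>P)) / T1"
  proof -
    have "(\<integral>\<beta>. (\<Sum>j\<in>{0..<T1}. f (\<beta> j)) / T1 \<partial>P) = (\<integral>\<beta>. (\<Sum>j\<in>{0..<T1}. f (\<beta> j)) \<partial>P) / T1"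
      by (rule integral_divide_zero)
    also have "(\<integral>\<beta>. (\<Sum>j\<in>{0..<T1}. f (\<beta> j)) \<partial>P) = (\<Sum>j\<in>{0..<T1}. (\<integral>\<beta>. f (\<beta> j) \<partial>P))"
    proof (rule Bochner_Integration.integral_sum)
      fix j
      show "integrable P (\<lambda>\<beta>. f (\<beta> j))"
      proof (rule finite_measure.integrable_const_bound[where B=1, OF PP_fm])
        show "AE \<beta> in P. norm (f (\<beta> j)) \<le> 1"
        proof (rule AE_I2)
          fix \<beta> assume "\<beta> \<in> space P"
          then have "0 \<le> f (\<beta> j) \<and> f (\<beta> j) \<le> 1" by (intro fb space_P_D)
          then show "norm (f (\<beta> j)) \<le> 1" by simp
        qed
      qed simp
    qed
    finally show ?thesis .
  qed
  also have "\<dots> = h (Nt \<alpha>)"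
  proof -
    have si: "(\<integral>\<beta>. f (\<beta> j) \<partial>P) = integral\<^sup>L D f" for j by (rule single_integral[OF fi])
    have "integral\<^sup>L D f = h (Nt \<alpha>)" by (simp add: h_def f_def[abs_def])
    then show ?thesis using T1_pos by (simp add: si)
  qed
  finally show ?thesis .
qed

lemma Est: "(\<integral>\<^sup>+\<omega>. ennreal (st \<omega>) \<partial>P) \<le> ennreal (4 * \<sigma>2 + 9282 * \<epsilon>)"
proof -
  have "(\<integral>\<^sup>+\<omega>. ennreal (st \<omega>) \<partial>P) = (\<integral>\<^sup>+\<alpha>. (\<integral>\<^sup>+\<beta>. ennreal (st (comb_seq T1 \<alpha> \<beta>)) \<partial>P) \<partial>P)"
    by (rule split_nn) simp
  also have "\<dots> = (\<integral>\<^sup>+\<alpha>. ennreal (h (Nt \<alpha>)) \<partial>P)"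
    by (rule nn_integral_cong) (rule inner_st)
  also have "\<dots> \<le> (\<integral>\<^sup>+\<alpha>. ennreal (2 * \<sigma>2 + 2 * Zt \<alpha>) \<partial>P)"
    by (intro nn_integral_mono ennreal_leI) (simp add: Zt_def h_upper)
  also have "\<dots> = ennreal (\<integral>\<alpha>. 2 * \<sigma>2 + 2 * Zt \<alpha> \<partial>P)"
  proof (rule nn_integral_eq_integral)
    show "integrable P (\<lambda>\<alpha>. 2 * \<sigma>2 + 2 * Zt \<alpha>)"
    proof (rule finite_measure.integrable_const_bound[where B=4, OF PP_fm])
      show "AE \<alpha> in P. norm (2 * \<sigma>2 + 2 * Zt \<alpha>) \<le> 4"
      proof (rule AE_I2)
        fix \<alpha>
        show "norm (2 * \<sigma>2 + 2 * Zt \<alpha>) \<le> 4" using sigma_nonneg sigma_le1 Zt_bounds[of \<alpha>] by simp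
      qed
    qed simp
    show "AE \<alpha> in P. 0 \<le> 2 * \<sigma>2 + 2 * Zt \<alpha>"
      using sigma_nonneg Zt_bounds by (auto intro!: AE_I2 add_nonneg_nonneg)
  qed
  also have "(\<integral>\<alpha>. 2 * \<sigma>2 + 2 * Zt \<alpha> \<partial>P) = 2 * \<sigma>2 + 2 * (\<integral>\<alpha>. Zt \<alpha> \<partial>P)"
  proof -
    have iZ: "integrable P Zt"
    proof (rule finite_measure.integrable_const_bound[where B=1, OF PP_fm])
      show "AE \<alpha> in P. norm (Zt \<alpha>) \<le> 1"
      proof (rule AE_I2)
        fix \<alpha>
        show "norm (Zt \<alpha>) \<le> 1" using Zt_bounds[of \<alpha>] by simp
      qed
    qed simp
    then show ?thesis by (simp add: prob_space.prob_space[OF P_prob])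
  qed
  also have "\<dots> \<le> 4 * \<sigma>2 + 9282 * \<epsilon>" using EZ by simp
  finally show ?thesis by (simp add: ennreal_leI)
qed

end


lemma final_arith:
  fixes a1 a2 :: real
  assumes a1: "2000 \<le> a1" and a2: "2000 \<le> a2"
  shows "64 / a2 + 1152 / a2\<^sup>2 + 128 / a1 + 18432 / a1\<^sup>2 + exp (- (a1 / 48)) \<le> 1 / 2"
proof -
  have "64 / a2 \<le> 64 / 2000" using a2 by (intro divide_left_mono) auto
  moreover have "1152 / a2\<^sup>2 \<le> 1152 / 2000\<^sup>2" using a2 by (intro divide_left_mono power_mono) auto
  moreover have "128 / a1 \<le> 128 / 2000" using a1 by (intro divide_left_mono) auto
  moreover have "18432 / a1\<^sup>2 \<le> 18432 / 2000\<^sup>2" using a1 by (intro divide_left_mono power_mono) auto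
  moreover have "exp (- (a1 / 48)) \<le> 1 / 40"
  proof -
    have "1 + a1 / 48 \<le> exp (a1 / 48)" by (rule exp_ge_add_one_self)
    then have "40 \<le> exp (a1 / 48)" using a1 by linarith
    then show ?thesis by (simp add: exp_minus field_simps)
  qed
  ultimately show ?thesis by (simp add: power2_eq_square)
qed

context estsetup
begin

lemma samples_pt: "\<omega> \<in> space P \<Longrightarrow> real (est_samples a1 a2 q \<epsilon> \<omega>) \<le> (2 * (a1 / \<epsilon> + 1) + a2 / \<epsilon> + 1) + (a2 / \<epsilon>\<^sup>2) * st \<omega>"
proof -
  have x0: "0 \<le> a2 * (1 / \<epsilon> + st \<omega> / \<epsilon>\<^sup>2)" using a2 eps0 st_nonneg[of \<omega>] by simp
  have "real (T2 \<omega>) \<le> a2 * (1 / \<epsilon> + st \<omega> / \<epsilon>\<^sup>2) + 1"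
    unfolding est_T2_def by (rule real_nat_ceiling_le[OF x0])
  also have "a2 * (1 / \<epsilon> + st \<omega> / \<epsilon>\<^sup>2) = a2 / \<epsilon> + (a2 / \<epsilon>\<^sup>2) * st \<omega>" by (simp add: field_simps)
  finally have t2: "real (T2 \<omega>) \<le> a2 / \<epsilon> + (a2 / \<epsilon>\<^sup>2) * st \<omega> + 1" .
  have eq: "real (est_samples a1 a2 q \<epsilon> \<omega>) = 2 * real T1 + real (T2 \<omega>)" by (simp add: est_samples_def)
  have h1: "2 * real T1 \<le> 2 * (a1 / \<epsilon> + 1)" using T1_le by simp
  from add_mono[OF h1 t2] have "2 * real T1 + real (T2 \<omega>) \<le> 2 * (a1 / \<epsilon> + 1) + (a2 / \<epsilon> + a2 / \<epsilon>\<^sup>2 * st \<omega> + 1)" .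
  then show ?thesis unfolding eq by (simp add: algebra_simps)
qed

lemma samples_bound:
  "(\<integral>\<^sup>+\<omega>. ennreal (real (est_samples a1 a2 q \<epsilon> \<omega>)) \<partial>P) \<le> ennreal ((2 * a1 + 3 + 9283 * a2) * (1 / \<epsilon> + \<sigma>2 / \<epsilon>\<^sup>2))"
proof -
  define c0 where "c0 = 2 * (a1 / \<epsilon> + 1) + a2 / \<epsilon> + 1"
  define k where "k = a2 / \<epsilon>\<^sup>2"
  have c0: "0 \<le> c0" using a1 a2 eps0 by (simp add: c0_def)
  have k: "0 \<le> k" using a2 by (simp add: k_def)
  have "(\<integral>\<^sup>+\<omega>. ennreal (real (est_samples a1 a2 q \<epsilon> \<omega>)) \<partial>P) \<le> (\<integral>\<^sup>+\<omega>. (ennreal c0 + ennreal k * ennreal (st \<omega>)) \<partial>P)"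
  proof (rule nn_integral_mono)
    fix \<omega> assume w: "\<omega> \<in> space P"
    have "ennreal (real (est_samples a1 a2 q \<epsilon> \<omega>)) \<le> ennreal (c0 + k * st \<omega>)"
      using samples_pt[OF w] by (intro ennreal_leI) (simp add: c0_def k_def)
    also have "\<dots> = ennreal c0 + ennreal k * ennreal (st \<omega>)"
      using c0 k st_nonneg[of \<omega>] by (simp add: ennreal_plus ennreal_mult)
    finally show "ennreal (real (est_samples a1 a2 q \<epsilon> \<omega>)) \<le> ennreal c0 + ennreal k * ennreal (st \<omega>)" .
  qed
  also have "\<dots> = ennreal c0 + ennreal k * (\<integral>\<^sup>+\<omega>. ennreal (st \<omega>) \<partial>P)"
    by (simp add: nn_integral_add nn_integral_cmult PS.emeasure_space_1)
  also have "\<dots> \<le> ennreal c0 + ennreal k * ennreal (4 * \<sigma>2 + 9282 * \<epsilon>)"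
    by (intro add_left_mono mult_left_mono Est) simp
  also have "\<dots> = ennreal (c0 + k * (4 * \<sigma>2 + 9282 * \<epsilon>))"
    using c0 k sigma_nonneg eps0 by (simp add: ennreal_plus ennreal_mult)
  also have "c0 + k * (4 * \<sigma>2 + 9282 * \<epsilon>) \<le> (2 * a1 + 3 + 9283 * a2) * (1 / \<epsilon> + \<sigma>2 / \<epsilon>\<^sup>2)"
  proof -
    have e1: "1 \<le> 1 / \<epsilon>" using eps0 eps1 by (simp add: field_simps)
    have "c0 + k * (4 * \<sigma>2 + 9282 * \<epsilon>) = 2 * a1 * (1 / \<epsilon>) + 3 + 9283 * a2 * (1 / \<epsilon>) + 4 * a2 * (\<sigma>2 / \<epsilon>\<^sup>2)"
      using eps0 by (simp add: c0_def k_def field_simps power2_eq_square)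
    also have "\<dots> \<le> 2 * a1 * (1 / \<epsilon>) + 3 * (1 / \<epsilon>) + 9283 * a2 * (1 / \<epsilon>) + (2 * a1 + 3 + 9283 * a2) * (\<sigma>2 / \<epsilon>\<^sup>2)"
    proof -
      have "0 \<le> \<sigma>2 / \<epsilon>\<^sup>2" using sigma_nonneg by simp
      then have "4 * a2 * (\<sigma>2 / \<epsilon>\<^sup>2) \<le> (2 * a1 + 3 + 9283 * a2) * (\<sigma>2 / \<epsilon>\<^sup>2)"
        using a1 a2 by (intro mult_right_mono) auto
      then show ?thesis using e1 by linarith
    qed
    also have "\<dots> = (2 * a1 + 3 + 9283 * a2) * (1 / \<epsilon> + \<sigma>2 / \<epsilon>\<^sup>2)"
      by (simp add: algebra_simps)
    finally show ?thesis .
  qed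
  finally show ?thesis by (simp add: ennreal_leI)
qed

lemma success_bound:
  assumes "2000 \<le> a1" "2000 \<le> a2"
  shows "1 / 2 \<le> measure P {\<omega> \<in> space P. \<bar>G (est_output a1 a2 q \<epsilon> \<omega>) - q\<bar> \<le> \<epsilon>}"
proof -
  have eq: "{\<omega> \<in> space P. \<bar>G (est_output a1 a2 q \<epsilon> \<omega>) - q\<bar> \<le> \<epsilon>} = space P - Fail"
    by (auto simp: Fail_def)
  have "measure P (space P - Fail) = 1 - measure P Fail"
    by (rule prob_space.prob_compl[OF P_prob]) simp
  moreover have "measure P Fail \<le> 1 / 2"
    using fail_bound final_arith[OF assms] by linarith
  ultimately show ?thesis unfolding eq by simp
qed

end

theorem theorem4p3:
  "\<exists>a0::real. \<forall>a1 a2. a0 \<le> a1 \<and> a0 \<le> a2 \<longrightarrow>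
     (\<exists>C c::real. 0 < C \<and> 0 < c \<and>
       (\<forall>(D :: real measure measure) (q::real) (\<epsilon>::real).
          prob_space D \<longrightarrow> sets D = sets (prob_algebra (borel :: real measure)) \<longrightarrow>
          (AE X in D. \<forall>x::real. measure X {x} = 0) \<longrightarrow>
          0 \<le> q \<longrightarrow> q \<le> 1 \<longrightarrow> 0 < \<epsilon> \<longrightarrow> \<epsilon> \<le> 1 \<longrightarrow>
          (\<integral>\<^sup>+ \<omega>. ennreal (real (est_samples a1 a2 q \<epsilon> \<omega>)) \<partial>(PiM UNIV (\<lambda>_::nat. D)))
             \<le> ennreal (C * (1 / \<epsilon> + sigma_sq D q / \<epsilon>\<^sup>2)) \<and>
          measure (PiM UNIV (\<lambda>_::nat. D))
            {\<omega> \<in> space (PiM UNIV (\<lambda>_::nat. D)).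
               \<bar>mixture_cdf D (est_output a1 a2 q \<epsilon> \<omega>) - q\<bar> \<le> \<epsilon>} \<ge> c))"
proof (rule exI[of _ 2000], intro allI impI)
  fix a1 a2 :: real
  assume a: "2000 \<le> a1 \<and> 2000 \<le> a2"
  have A: "\<forall>(D :: real measure measure) (q::real) (\<epsilon>::real).
          prob_space D \<longrightarrow> sets D = sets (prob_algebra (borel :: real measure)) \<longrightarrow>
          (AE X in D. \<forall>x::real. measure X {x} = 0) \<longrightarrow>
          0 \<le> q \<longrightarrow> q \<le> 1 \<longrightarrow> 0 < \<epsilon> \<longrightarrow> \<epsilon> \<le> 1 \<longrightarrow>
          (\<integral>\<^sup>+ \<omega>. ennreal (real (est_samples a1 a2 q \<epsilon> \<omega>)) \<partial>(PiM UNIV (\<lambda>_::nat. D)))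
             \<le> ennreal ((2 * a1 + 3 + 9283 * a2) * (1 / \<epsilon> + sigma_sq D q / \<epsilon>\<^sup>2)) \<and>
          measure (PiM UNIV (\<lambda>_::nat. D))
            {\<omega> \<in> space (PiM UNIV (\<lambda>_::nat. D)).
               \<bar>mixture_cdf D (est_output a1 a2 q \<epsilon> \<omega>) - q\<bar> \<le> \<epsilon>} \<ge> 1/2"
  proof (intro allI impI)
    fix D :: "real measure measure" and q \<epsilon> :: real
    assume D: "prob_space D" and Ds: "sets D = sets (prob_algebra (borel :: real measure))"
      and At: "AE X in D. \<forall>x::real. measure X {x} = 0" and q0: "0 \<le> q" and q1: "q \<le> 1"
      and e0: "0 < \<epsilon>" and e1: "\<epsilon> \<le> 1"
    interpret E: estsetup D q a1 a2 \<epsilon>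
      by (rule estsetup.intro[OF mixsetup.intro[OF D Ds At q0 q1] estsetup_axioms.intro]) (use a e0 e1 in auto)
    have s1: "(\<integral>\<^sup>+ \<omega>. ennreal (real (est_samples a1 a2 q \<epsilon> \<omega>)) \<partial>(PiM UNIV (\<lambda>_::nat. D)))
             \<le> ennreal ((2 * a1 + 3 + 9283 * a2) * (1 / \<epsilon> + sigma_sq D q / \<epsilon>\<^sup>2))"
      by (rule E.samples_bound)
    have s2: "1/2 \<le> measure (PiM UNIV (\<lambda>_::nat. D))
            {\<omega> \<in> space (PiM UNIV (\<lambda>_::nat. D)).
               \<bar>mixture_cdf D (est_output a1 a2 q \<epsilon> \<omega>) - q\<bar> \<le> \<epsilon>}"
      using E.success_bound a by simp
    from s1 s2 show "(\<integral>\<^sup>+ \<omega>. ennreal (real (est_samples a1 a2 q \<epsilon> \<omega>)) \<partial>(PiM UNIV (\<lambda>_::nat. D)))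
             \<le> ennreal ((2 * a1 + 3 + 9283 * a2) * (1 / \<epsilon> + sigma_sq D q / \<epsilon>\<^sup>2)) \<and>
          measure (PiM UNIV (\<lambda>_::nat. D))
            {\<omega> \<in> space (PiM UNIV (\<lambda>_::nat. D)).
               \<bar>mixture_cdf D (est_output a1 a2 q \<epsilon> \<omega>) - q\<bar> \<le> \<epsilon>} \<ge> 1/2" by (rule conjI)
  qed
  show "\<exists>C c::real. 0 < C \<and> 0 < c \<and>
       (\<forall>(D :: real measure measure) (q::real) (\<epsilon>::real).
          prob_space D \<longrightarrow> sets D = sets (prob_algebra (borel :: real measure)) \<longrightarrow>
          (AE X in D. \<forall>x::real. measure X {x} = 0) \<longrightarrow>
          0 \<le> q \<longrightarrow> q \<le> 1 \<longrightarrow> 0 < \<epsilon> \<longrightarrow> \<epsilon> \<le> 1 \<longrightarrow>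
          (\<integral>\<^sup>+ \<omega>. ennreal (real (est_samples a1 a2 q \<epsilon> \<omega>)) \<partial>(PiM UNIV (\<lambda>_::nat. D)))
             \<le> ennreal (C * (1 / \<epsilon> + sigma_sq D q / \<epsilon>\<^sup>2)) \<and>
          measure (PiM UNIV (\<lambda>_::nat. D))
            {\<omega> \<in> space (PiM UNIV (\<lambda>_::nat. D)).
               \<bar>mixture_cdf D (est_output a1 a2 q \<epsilon> \<omega>) - q\<bar> \<le> \<epsilon>} \<ge> c)"
    apply (rule exI[where x="2 * a1 + 3 + 9283 * a2"])
    apply (rule exI[where x="1/2::real"])
    apply (intro conjI)
      apply (use a in simp)
     apply simp
    apply (rule A)
    done
qed

end
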